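(* Let $\mathcal{X}$ be a subcategory of $\mathcal{C}$ closed under extensions and CoCones, and let $\mathcal{W}$ be an $\mathcal{X}$-injective cogenerator for $\mathcal{X}$. Then $(\mathcal{X},\widehat{\mathcal{W}})$ is a cotorsion pair on the extriangulated category $\widehat{\mathcal{X}}$ (with the extriangulated structure restricted from $\mathcal{C}$).
   Context: $\mathcal{C}=(\mathcal{C},\mathbb{E},\mathfrak{s})$ is an extriangulated category (in the sense of Nakaoka–Palu) with enough projectives and enough injectives; a conflation realizing $\delta\in\mathbb{E}(C,A)$ is written as an $\mathbb{E}$-triangle $A\to B\to C\dashrightarrow$. All subcategories are full, additive, closed under isomorphisms and direct summands. Higher extensions: $\mathbb{E}^1=\mathbb{E}$, $\mathbb{E}^{i+1}(X,Y)=\mathbb{E}(X,\Sigma^iY)\cong\mathbb{E}(\Omega^iX,Y)$. $\mathcal{X}$ is extension-closed if for every $\mathbb{E}$-triangle $A\to B\to C\dashrightarrow$ with $A,C\in\mathcal{X}$ one has $B\in\mathcal{X}$; closed under CoCones if for every such $\mathbb{E}$-triangle with $B,C\in\mathcal{X}$ one has $A\in\mathcal{X}$. $\mathcal{W}$ is an $\mathcal{X}$-injective cogenerator for $\mathcal{X}$ if $\mathcal{W}\subseteq\mathcal{X}$, for each $X\in\mathcal{X}$ there is an $\mathbb{E}$-triangle $X\to W\to X'\dashrightarrow$ with $W\in\mathcal{W}$, $X'\in\mathcal{X}$, and $\mathbb{E}^i(X,W)=0$ for all $X\in\mathcal{X}$, $W\in\mathcal{W}$, $i\ge1$. For a subcategory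 $\mathcal{Z}$ and $n\ge0$, $\widehat{\mathcal{Z}}_n$ is the class of objects $C$ for which there exist $\mathbb{E}$-triangles $K_{i+1}\to Z_i\to K_i\dashrightarrow$ ($0\le i\le n-1$) with $K_0=C$, all $Z_i\in\mathcal{Z}$ and $K_n\in\mathcal{Z}$; $\widehat{\mathcal{Z}}=\bigcup_n\widehat{\mathcal{Z}}_n$ ($\widehat{\mathcal{X}}$ is extension-closed in $\mathcal{C}$ under these hypotheses, hence extriangulated). A pair $(\mathcal{U},\mathcal{V})$ of subcategories of an extriangulated category $\mathcal{D}$ is a cotorsion pair on $\mathcal{D}$ if $\mathbb{E}(\mathcal{U},\mathcal{V})=0$ and every $C\in\mathcal{D}$ admits $\mathbb{E}$-triangles $V_C\to U_C\to C\dashrightarrow$ and $C\to V^C\to U^C\dashrightarrow$ in $\mathcal{D}$ with $U_C,U^C\in\mathcal{U}$, $V_C,V^C\in\mathcal{V}$. *)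

theory Defs
  imports Main
begin

text \<open>
An extriangulated category in the sense of Nakaoka--Palu, encoded concretely.
Objects have type 'o, morphisms type 'm (each morphism carries its domain and
codomain via mdom / mcod), and elements of the bifunctor E have type 'e.
Ext T C A is the abelian group E(C,A); an E-triangle A -x-> B -y-> C with
delta in E(C,A) is realised when real T delta x y holds.
epush T C a delta is a_* delta (for a : A -> B, delta in E(C,A)),
epull T A c delta is c^* delta (for c : C' -> C, delta in E(C,A)).
\<close>

record ('o, 'm, 'e) extri =
  obj   :: "'o set"
  mor   :: "'m set"
  mdom  :: "'m \<Rightarrow> 'o"
  mcod  :: "'m \<Rightarrow> 'o"
  cmp   :: "'m \<Rightarrow> 'm \<Rightarrow> 'm"   (* cmp g f = g o f *)
  idm   :: "'o \<Rightarrow> 'm"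
  madd  :: "'m \<Rightarrow> 'm \<Rightarrow> 'm"
  mzero :: "'o \<Rightarrow> 'o \<Rightarrow> 'm"
  Ext   :: "'o \<Rightarrow> 'o \<Rightarrow> 'e set"
  eadd  :: "'o \<Rightarrow> 'o \<Rightarrow> 'e \<Rightarrow> 'e \<Rightarrow> 'e"
  ezero :: "'o \<Rightarrow> 'o \<Rightarrow> 'e"
  epush :: "'o \<Rightarrow> 'm \<Rightarrow> 'e \<Rightarrow> 'e"
  epull :: "'o \<Rightarrow> 'm \<Rightarrow> 'e \<Rightarrow> 'e"
  real  :: "'e \<Rightarrow> 'm \<Rightarrow> 'm \<Rightarrow> bool"

definition hom :: "('o,'m,'e) extri \<Rightarrow> 'o \<Rightarrow> 'o \<Rightarrow> 'm set" where
  "hom T A B = {f \<in> mor T. mdom T f = A \<and> mcod T f = B}"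

definition is_iso :: "('o,'m,'e) extri \<Rightarrow> 'o \<Rightarrow> 'o \<Rightarrow> 'm \<Rightarrow> bool" where
  "is_iso T A B f \<longleftrightarrow> f \<in> hom T A B \<and>
     (\<exists>g \<in> hom T B A. cmp T g f = idm T A \<and> cmp T f g = idm T B)"

definition isomorphic :: "('o,'m,'e) extri \<Rightarrow> 'o \<Rightarrow> 'o \<Rightarrow> bool" where
  "isomorphic T A B \<longleftrightarrow> (\<exists>f. is_iso T A B f)"

definition is_zero_obj :: "('o,'m,'e) extri \<Rightarrow> 'o \<Rightarrow> bool" where
  "is_zero_obj T Z \<longleftrightarrow> Z \<in> obj T \<and> idm T Z = mzero T Z Z"

definition is_biproduct ::
  "('o,'m,'e) extri \<Rightarrow> 'o \<Rightarrow> 'o \<Rightarrow> 'o \<Rightarrow> 'm \<Rightarrow> 'm \<Rightarrow> 'm \<Rightarrow> 'm \<Rightarrow> bool" where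
  "is_biproduct T A B S i1 i2 p1 p2 \<longleftrightarrow>
     i1 \<in> hom T A S \<and> i2 \<in> hom T B S \<and> p1 \<in> hom T S A \<and> p2 \<in> hom T S B \<and>
     cmp T p1 i1 = idm T A \<and> cmp T p2 i2 = idm T B \<and>
     cmp T p1 i2 = mzero T B A \<and> cmp T p2 i1 = mzero T A B \<and>
     madd T (cmp T i1 p1) (cmp T i2 p2) = idm T S"

definition is_category :: "('o,'m,'e) extri \<Rightarrow> bool" where
  "is_category T \<longleftrightarrow>
     (\<forall>f \<in> mor T. mdom T f \<in> obj T \<and> mcod T f \<in> obj T) \<and>
     (\<forall>A \<in> obj T. idm T A \<in> hom T A A) \<and>
     (\<forall>A B C f g. f \<in> hom T A B \<longrightarrow> g \<in> hom T B C \<longrightarrow> cmp T g f \<in> hom T A C) \<and>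
     (\<forall>A B f. f \<in> hom T A B \<longrightarrow> cmp T f (idm T A) = f \<and> cmp T (idm T B) f = f) \<and>
     (\<forall>A B C D f g h. f \<in> hom T A B \<longrightarrow> g \<in> hom T B C \<longrightarrow> h \<in> hom T C D \<longrightarrow>
        cmp T h (cmp T g f) = cmp T (cmp T h g) f)"

definition is_additive :: "('o,'m,'e) extri \<Rightarrow> bool" where
  "is_additive T \<longleftrightarrow>
     (\<forall>A \<in> obj T. \<forall>B \<in> obj T.
        mzero T A B \<in> hom T A B \<and>
        (\<forall>f \<in> hom T A B. \<forall>g \<in> hom T A B. madd T f g \<in> hom T A B) \<and>
        (\<forall>f \<in> hom T A B. \<forall>g \<in> hom T A B. \<forall>h \<in> hom T A B.
            madd T (madd T f g) h = madd T f (madd T g h)) \<and>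
        (\<forall>f \<in> hom T A B. \<forall>g \<in> hom T A B. madd T f g = madd T g f) \<and>
        (\<forall>f \<in> hom T A B. madd T f (mzero T A B) = f) \<and>
        (\<forall>f \<in> hom T A B. \<exists>g \<in> hom T A B. madd T f g = mzero T A B)) \<and>
     (\<forall>A B C f g h. f \<in> hom T A B \<longrightarrow> g \<in> hom T A B \<longrightarrow> h \<in> hom T B C \<longrightarrow>
        cmp T h (madd T f g) = madd T (cmp T h f) (cmp T h g)) \<and>
     (\<forall>A B C f g h. f \<in> hom T B C \<longrightarrow> g \<in> hom T B C \<longrightarrow> h \<in> hom T A B \<longrightarrow>
        cmp T (madd T f g) h = madd T (cmp T f h) (cmp T g h)) \<and>
     (\<exists>Z. is_zero_obj T Z) \<and>
     (\<forall>A \<in> obj T. \<forall>B \<in> obj T. \<exists>S i1 i2 p1 p2. S \<in> obj T \<and> is_biproduct T A B S i1 i2 p1 p2)"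

definition is_biadditive_E :: "('o,'m,'e) extri \<Rightarrow> bool" where
  "is_biadditive_E T \<longleftrightarrow>
     (\<forall>C \<in> obj T. \<forall>A \<in> obj T.
        ezero T C A \<in> Ext T C A \<and>
        (\<forall>d \<in> Ext T C A. \<forall>e \<in> Ext T C A. eadd T C A d e \<in> Ext T C A) \<and>
        (\<forall>d \<in> Ext T C A. \<forall>e \<in> Ext T C A. \<forall>f \<in> Ext T C A.
            eadd T C A (eadd T C A d e) f = eadd T C A d (eadd T C A e f)) \<and>
        (\<forall>d \<in> Ext T C A. \<forall>e \<in> Ext T C A. eadd T C A d e = eadd T C A e d) \<and>
        (\<forall>d \<in> Ext T C A. eadd T C A d (ezero T C A) = d) \<and>
        (\<forall>d \<in> Ext T C A. \<exists>e \<in> Ext T C A. eadd T C A d e = ezero T C A)) \<and>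
     (\<forall>C A B a d. C \<in> obj T \<longrightarrow> a \<in> hom T A B \<longrightarrow> d \<in> Ext T C A \<longrightarrow>
        epush T C a d \<in> Ext T C B) \<and>
     (\<forall>A C C' c d. A \<in> obj T \<longrightarrow> c \<in> hom T C' C \<longrightarrow> d \<in> Ext T C A \<longrightarrow>
        epull T A c d \<in> Ext T C' A) \<and>
     (\<forall>C A d. C \<in> obj T \<longrightarrow> A \<in> obj T \<longrightarrow> d \<in> Ext T C A \<longrightarrow>
        epush T C (idm T A) d = d \<and> epull T A (idm T C) d = d) \<and>
     (\<forall>C A B D a b d. C \<in> obj T \<longrightarrow> a \<in> hom T A B \<longrightarrow> b \<in> hom T B D \<longrightarrow> d \<in> Ext T C A \<longrightarrow>
        epush T C (cmp T b a) d = epush T C b (epush T C a d)) \<and>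
     (\<forall>A C C' C'' c c' d. A \<in> obj T \<longrightarrow> c \<in> hom T C' C \<longrightarrow> c' \<in> hom T C'' C' \<longrightarrow>
        d \<in> Ext T C A \<longrightarrow> epull T A (cmp T c c') d = epull T A c' (epull T A c d)) \<and>
     (\<forall>A B C C' a c d. a \<in> hom T A B \<longrightarrow> c \<in> hom T C' C \<longrightarrow> d \<in> Ext T C A \<longrightarrow>
        epush T C' a (epull T A c d) = epull T B c (epush T C a d)) \<and>
     (\<forall>C A B a d e. C \<in> obj T \<longrightarrow> a \<in> hom T A B \<longrightarrow> d \<in> Ext T C A \<longrightarrow> e \<in> Ext T C A \<longrightarrow>
        epush T C a (eadd T C A d e) = eadd T C B (epush T C a d) (epush T C a e)) \<and>
     (\<forall>A C C' c d e. A \<in> obj T \<longrightarrow> c \<in> hom T C' C \<longrightarrow> d \<in> Ext T C A \<longrightarrow> e \<in> Ext T C A \<longrightarrow>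
        epull T A c (eadd T C A d e) = eadd T C' A (epull T A c d) (epull T A c e)) \<and>
     (\<forall>C A B a a' d. C \<in> obj T \<longrightarrow> a \<in> hom T A B \<longrightarrow> a' \<in> hom T A B \<longrightarrow> d \<in> Ext T C A \<longrightarrow>
        epush T C (madd T a a') d = eadd T C B (epush T C a d) (epush T C a' d)) \<and>
     (\<forall>A C C' c c' d. A \<in> obj T \<longrightarrow> c \<in> hom T C' C \<longrightarrow> c' \<in> hom T C' C \<longrightarrow> d \<in> Ext T C A \<longrightarrow>
        epull T A (madd T c c') d = eadd T C' A (epull T A c d) (epull T A c' d))"

definition etri :: "('o,'m,'e) extri \<Rightarrow> 'o \<Rightarrow> 'o \<Rightarrow> 'o \<Rightarrow> 'm \<Rightarrow> 'm \<Rightarrow> 'e \<Rightarrow> bool" where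
  "etri T A B C x y d \<longleftrightarrow>
     A \<in> obj T \<and> C \<in> obj T \<and> x \<in> hom T A B \<and> y \<in> hom T B C \<and> d \<in> Ext T C A \<and> real T d x y"

definition conflation :: "('o,'m,'e) extri \<Rightarrow> 'o \<Rightarrow> 'o \<Rightarrow> 'o \<Rightarrow> bool" where
  "conflation T A B C \<longleftrightarrow> (\<exists>x y d. etri T A B C x y d)"

text \<open>s is a realization: s(delta) is an equivalence class of sequences, and (ET2).\<close>
definition is_realization :: "('o,'m,'e) extri \<Rightarrow> bool" where
  "is_realization T \<longleftrightarrow>
     (\<forall>d x y. real T d x y \<longrightarrow> etri T (mdom T x) (mcod T x) (mcod T y) x y d) \<and>
     (\<forall>C \<in> obj T. \<forall>A \<in> obj T. \<forall>d \<in> Ext T C A. \<exists>B x y. etri T A B C x y d) \<and>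
     (\<forall>A B B' C x y x' y' d. etri T A B C x y d \<longrightarrow> etri T A B' C x' y' d \<longrightarrow>
        (\<exists>b. is_iso T B B' b \<and> cmp T b x = x' \<and> cmp T y' b = y)) \<and>
     (\<forall>A B B' C x y d b b'. etri T A B C x y d \<longrightarrow> b \<in> hom T B B' \<longrightarrow> b' \<in> hom T B' B \<longrightarrow>
        cmp T b' b = idm T B \<longrightarrow> cmp T b b' = idm T B' \<longrightarrow> real T d (cmp T b x) (cmp T y b')) \<and>
     (\<forall>A B C A' B' C' x y x' y' d d' a c.
        etri T A B C x y d \<longrightarrow> etri T A' B' C' x' y' d' \<longrightarrow>
        a \<in> hom T A A' \<longrightarrow> c \<in> hom T C C' \<longrightarrow> epush T C a d = epull T A' c d' \<longrightarrow>
        (\<exists>b \<in> hom T B B'. cmp T b x = cmp T x' a \<and> cmp T y' b = cmp T c y))"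

definition additive_realization :: "('o,'m,'e) extri \<Rightarrow> bool" where
  "additive_realization T \<longleftrightarrow>
     (\<forall>A C S i1 i2 p1 p2. is_biproduct T A C S i1 i2 p1 p2 \<longrightarrow>
        real T (ezero T C A) i1 p2) \<and>
     (\<forall>A B C A' B' C' x y d x' y' d' SA iA iA' pA pA' SB iB iB' pB pB' SC iC iC' pC pC'.
        etri T A B C x y d \<longrightarrow> etri T A' B' C' x' y' d' \<longrightarrow>
        is_biproduct T A A' SA iA iA' pA pA' \<longrightarrow>
        is_biproduct T B B' SB iB iB' pB pB' \<longrightarrow>
        is_biproduct T C C' SC iC iC' pC pC' \<longrightarrow>
        real T (eadd T SC SA (epush T SC iA (epull T A pC d)) (epush T SC iA' (epull T A' pC' d')))
               (madd T (cmp T iB (cmp T x pA)) (cmp T iB' (cmp T x' pA')))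
               (madd T (cmp T iC (cmp T y pB)) (cmp T iC' (cmp T y' pB'))))"

definition ET3 :: "('o,'m,'e) extri \<Rightarrow> bool" where
  "ET3 T \<longleftrightarrow>
     (\<forall>A B C A' B' C' x y x' y' d d' a b.
        etri T A B C x y d \<longrightarrow> etri T A' B' C' x' y' d' \<longrightarrow>
        a \<in> hom T A A' \<longrightarrow> b \<in> hom T B B' \<longrightarrow> cmp T b x = cmp T x' a \<longrightarrow>
        (\<exists>c \<in> hom T C C'. cmp T c y = cmp T y' b \<and> epush T C a d = epull T A' c d'))"

definition ET3op :: "('o,'m,'e) extri \<Rightarrow> bool" where
  "ET3op T \<longleftrightarrow>
     (\<forall>A B C A' B' C' x y x' y' d d' b c.
        etri T A B C x y d \<longrightarrow> etri T A' B' C' x' y' d' \<longrightarrow>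
        b \<in> hom T B B' \<longrightarrow> c \<in> hom T C C' \<longrightarrow> cmp T c y = cmp T y' b \<longrightarrow>
        (\<exists>a \<in> hom T A A'. cmp T x' a = cmp T b x \<and> epush T C a d = epull T A' c d'))"

definition ET4 :: "('o,'m,'e) extri \<Rightarrow> bool" where
  "ET4 T \<longleftrightarrow>
     (\<forall>A B C D F f f' g g' d d'.
        etri T A B D f f' d \<longrightarrow> etri T B C F g g' d' \<longrightarrow>
        (\<exists>E h h' dd e d''.
           etri T A C E h h' d'' \<and> dd \<in> hom T D E \<and> e \<in> hom T E F \<and>
           etri T D E F dd e (epush T F f' d') \<and>
           epull T A dd d'' = d \<and>
           epush T E f d'' = epull T B e d' \<and>
           h = cmp T g f \<and> cmp T h' g = cmp T dd f' \<and> cmp T e h' = g'))"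

definition ET4op :: "('o,'m,'e) extri \<Rightarrow> bool" where
  "ET4op T \<longleftrightarrow>
     (\<forall>A B C D F f f' g g' d d'.
        etri T D A B f' f d \<longrightarrow> etri T F B C g' g d' \<longrightarrow>
        (\<exists>E h h' dd e d''.
           etri T E A C h' h d'' \<and> dd \<in> hom T D E \<and> e \<in> hom T E F \<and>
           etri T D E F dd e (epull T D g' d) \<and>
           d' = epush T C e d'' \<and>
           epush T B dd d = epull T E g d'' \<and>
           h = cmp T g f \<and> cmp T h' dd = f' \<and> cmp T f h' = cmp T g' e))"

definition extriangulated :: "('o,'m,'e) extri \<Rightarrow> bool" where
  "extriangulated T \<longleftrightarrow> is_category T \<and> is_additive T \<and> is_biadditive_E T \<and>
     is_realization T \<and> additive_realization T \<and> ET3 T \<and> ET3op T \<and> ET4 T \<and> ET4op T"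

definition projective :: "('o,'m,'e) extri \<Rightarrow> 'o \<Rightarrow> bool" where
  "projective T P \<longleftrightarrow> P \<in> obj T \<and>
     (\<forall>A B C x y d f. etri T A B C x y d \<longrightarrow> f \<in> hom T P C \<longrightarrow>
        (\<exists>g \<in> hom T P B. cmp T y g = f))"

definition injective :: "('o,'m,'e) extri \<Rightarrow> 'o \<Rightarrow> bool" where
  "injective T I \<longleftrightarrow> I \<in> obj T \<and>
     (\<forall>A B C x y d f. etri T A B C x y d \<longrightarrow> f \<in> hom T A I \<longrightarrow>
        (\<exists>g \<in> hom T B I. cmp T g x = f))"

definition enough_projectives :: "('o,'m,'e) extri \<Rightarrow> bool" where
  "enough_projectives T \<longleftrightarrow> (\<forall>C \<in> obj T. \<exists>A P. projective T P \<and> conflation T A P C)"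

definition enough_injectives :: "('o,'m,'e) extri \<Rightarrow> bool" where
  "enough_injectives T \<longleftrightarrow> (\<forall>A \<in> obj T. \<exists>I C. injective T I \<and> conflation T A I C)"

definition Ext_zero :: "('o,'m,'e) extri \<Rightarrow> 'o \<Rightarrow> 'o \<Rightarrow> bool" where
  "Ext_zero T C A \<longleftrightarrow> Ext T C A = {ezero T C A}"

text \<open>Higher extensions: E^n(X,Y) = E(X, Sigma^(n-1) Y) = 0 for n \<ge> 1, where
Sigma^k Y is obtained from any chain of E-triangles L_j -> I_j -> L_(j+1)
with I_j injective and L_0 = Y (the vanishing is independent of the choices).\<close>
definition higher_Ext_zero :: "('o,'m,'e) extri \<Rightarrow> nat \<Rightarrow> 'o \<Rightarrow> 'o \<Rightarrow> bool" where
  "higher_Ext_zero T n X Y \<longleftrightarrow>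
     (\<forall>L I. L 0 = Y \<longrightarrow>
        (\<forall>j < n - 1. injective T (I j) \<and> conflation T (L j) (I j) (L (Suc j))) \<longrightarrow>
        Ext_zero T X (L (n - 1)))"

text \<open>Full additive subcategory S of the full subcategory D (here D is a set of
objects), closed under isomorphisms and direct summands (within D).\<close>
definition subcat_in :: "('o,'m,'e) extri \<Rightarrow> 'o set \<Rightarrow> 'o set \<Rightarrow> bool" where
  "subcat_in T D S \<longleftrightarrow> S \<subseteq> D \<and>
     (\<exists>Z \<in> S. is_zero_obj T Z) \<and>
     (\<forall>A B S' i1 i2 p1 p2. A \<in> S \<longrightarrow> B \<in> S \<longrightarrow> S' \<in> D \<longrightarrow>
        is_biproduct T A B S' i1 i2 p1 p2 \<longrightarrow> S' \<in> S) \<and>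
     (\<forall>A B. A \<in> S \<longrightarrow> B \<in> D \<longrightarrow> isomorphic T A B \<longrightarrow> B \<in> S) \<and>
     (\<forall>A B S' i1 i2 p1 p2. S' \<in> S \<longrightarrow> A \<in> D \<longrightarrow> B \<in> D \<longrightarrow>
        is_biproduct T A B S' i1 i2 p1 p2 \<longrightarrow> A \<in> S)"

definition ext_closed :: "('o,'m,'e) extri \<Rightarrow> 'o set \<Rightarrow> bool" where
  "ext_closed T X \<longleftrightarrow> (\<forall>A B C. conflation T A B C \<longrightarrow> A \<in> X \<longrightarrow> C \<in> X \<longrightarrow> B \<in> X)"

definition cocone_closed :: "('o,'m,'e) extri \<Rightarrow> 'o set \<Rightarrow> bool" where
  "cocone_closed T X \<longleftrightarrow> (\<forall>A B C. conflation T A B C \<longrightarrow> B \<in> X \<longrightarrow> C \<in> X \<longrightarrow> A \<in> X)"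

definition inj_cogenerator :: "('o,'m,'e) extri \<Rightarrow> 'o set \<Rightarrow> 'o set \<Rightarrow> bool" where
  "inj_cogenerator T X W \<longleftrightarrow> W \<subseteq> X \<and>
     (\<forall>A \<in> X. \<exists>V A'. V \<in> W \<and> A' \<in> X \<and> conflation T A V A') \<and>
     (\<forall>A \<in> X. \<forall>V \<in> W. \<forall>i \<ge> 1. higher_Ext_zero T i A V)"

definition hat_n :: "('o,'m,'e) extri \<Rightarrow> 'o set \<Rightarrow> nat \<Rightarrow> 'o set" where
  "hat_n T Z n = {C. \<exists>K Zs. K 0 = C \<and>
       (\<forall>i < n. Zs i \<in> Z \<and> conflation T (K (Suc i)) (Zs i) (K i)) \<and> K n \<in> Z}"

definition hat :: "('o,'m,'e) extri \<Rightarrow> 'o set \<Rightarrow> 'o set" where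
  "hat T Z = (\<Union>n. hat_n T Z n)"

text \<open>Cotorsion pair (U,V) on the extriangulated (full, extension-closed) subcategory D,
whose E-triangles are the E-triangles of T with all terms in D.\<close>
definition cotorsion_pair_on :: "('o,'m,'e) extri \<Rightarrow> 'o set \<Rightarrow> 'o set \<Rightarrow> 'o set \<Rightarrow> bool" where
  "cotorsion_pair_on T D U V \<longleftrightarrow>
     subcat_in T D U \<and> subcat_in T D V \<and>
     (\<forall>A \<in> U. \<forall>B \<in> V. Ext_zero T A B) \<and>
     (\<forall>C \<in> D. \<exists>VC UC. VC \<in> V \<and> UC \<in> U \<and> conflation T VC UC C) \<and>
     (\<forall>C \<in> D. \<exists>VC UC. VC \<in> V \<and> UC \<in> U \<and> conflation T C VC UC)"

end

theory Submission
  imports Defs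
begin

locale ETC =
  fixes T :: "('o,'m,'e) extri"
  assumes ext: "extriangulated T" and einj: "enough_injectives T"
begin

lemma cat: "is_category T" using ext unfolding extriangulated_def by blast
lemma addi: "is_additive T" using ext unfolding extriangulated_def by blast
lemma biE: "is_biadditive_E T" using ext unfolding extriangulated_def by blast
lemma realz: "is_realization T" using ext unfolding extriangulated_def by blast
lemma areal: "additive_realization T" using ext unfolding extriangulated_def by blast
lemma et3: "ET3 T" using ext unfolding extriangulated_def by blast
lemma et4: "ET4 T" using ext unfolding extriangulated_def by blast
lemma et4op: "ET4op T" using ext unfolding extriangulated_def by blast

lemma hom_obj: "f \<in> hom T A B \<Longrightarrow> A \<in> obj T \<and> B \<in> obj T"
  using cat unfolding is_category_def hom_def by blast
lemma id_hom: "A \<in> obj T \<Longrightarrow> idm T A \<in> hom T A A"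
  using cat unfolding is_category_def by blast
lemma cmp_hom: "f \<in> hom T A B \<Longrightarrow> g \<in> hom T B C \<Longrightarrow> cmp T g f \<in> hom T A C"
  using cat unfolding is_category_def by blast
lemma id_r: "f \<in> hom T A B \<Longrightarrow> cmp T f (idm T A) = f"
  using cat unfolding is_category_def by blast
lemma id_l: "f \<in> hom T A B \<Longrightarrow> cmp T (idm T B) f = f"
  using cat unfolding is_category_def by blast
lemma assoc: "f \<in> hom T A B \<Longrightarrow> g \<in> hom T B C \<Longrightarrow> h \<in> hom T C D \<Longrightarrow>
        cmp T h (cmp T g f) = cmp T (cmp T h g) f"
  using cat unfolding is_category_def by blast

lemma zero_hom: "A \<in> obj T \<Longrightarrow> B \<in> obj T \<Longrightarrow> mzero T A B \<in> hom T A B"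
  using addi unfolding is_additive_def by blast
lemma addgrp: "A \<in> obj T \<Longrightarrow> B \<in> obj T \<Longrightarrow>
        mzero T A B \<in> hom T A B \<and>
        (\<forall>f \<in> hom T A B. \<forall>g \<in> hom T A B. madd T f g \<in> hom T A B) \<and>
        (\<forall>f \<in> hom T A B. \<forall>g \<in> hom T A B. \<forall>h \<in> hom T A B.
            madd T (madd T f g) h = madd T f (madd T g h)) \<and>
        (\<forall>f \<in> hom T A B. \<forall>g \<in> hom T A B. madd T f g = madd T g f) \<and>
        (\<forall>f \<in> hom T A B. madd T f (mzero T A B) = f) \<and>
        (\<forall>f \<in> hom T A B. \<exists>g \<in> hom T A B. madd T f g = mzero T A B)"
  using addi unfolding is_additive_def by (elim conjE) (drule bspec, assumption)+
lemma add_hom: "f \<in> hom T A B \<Longrightarrow> g \<in> hom T A B \<Longrightarrow> madd T f g \<in> hom T A B"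
  using addgrp hom_obj by blast
lemma add_assoc: "f \<in> hom T A B \<Longrightarrow> g \<in> hom T A B \<Longrightarrow> h \<in> hom T A B \<Longrightarrow>
   madd T (madd T f g) h = madd T f (madd T g h)"
  using addgrp hom_obj by meson
lemma add_comm: "f \<in> hom T A B \<Longrightarrow> g \<in> hom T A B \<Longrightarrow> madd T f g = madd T g f"
  using addgrp hom_obj by meson
lemma add_zero: "f \<in> hom T A B \<Longrightarrow> madd T f (mzero T A B) = f"
  using addgrp hom_obj by meson
lemma add_inv: "f \<in> hom T A B \<Longrightarrow> \<exists>g \<in> hom T A B. madd T f g = mzero T A B"
  using addgrp hom_obj by meson
lemma distl: "f \<in> hom T A B \<Longrightarrow> g \<in> hom T A B \<Longrightarrow> h \<in> hom T B C \<Longrightarrow>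
        cmp T h (madd T f g) = madd T (cmp T h f) (cmp T h g)"
  using addi unfolding is_additive_def by blast
lemma distr: "f \<in> hom T B C \<Longrightarrow> g \<in> hom T B C \<Longrightarrow> h \<in> hom T A B \<Longrightarrow>
        cmp T (madd T f g) h = madd T (cmp T f h) (cmp T g h)"
  using addi unfolding is_additive_def by blast
lemma zero_ex: "\<exists>Z. is_zero_obj T Z"
  using addi unfolding is_additive_def by blast
lemma bip_ex: "A \<in> obj T \<Longrightarrow> B \<in> obj T \<Longrightarrow> \<exists>S i1 i2 p1 p2. S \<in> obj T \<and> is_biproduct T A B S i1 i2 p1 p2"
  using addi unfolding is_additive_def by blast

lemmas bE1 = biE[unfolded is_biadditive_E_def, THEN conjunct1]
lemmas bE2 = biE[unfolded is_biadditive_E_def, THEN conjunct2, THEN conjunct1]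
lemmas bE3 = biE[unfolded is_biadditive_E_def, THEN conjunct2, THEN conjunct2, THEN conjunct1]
lemmas bE4 = biE[unfolded is_biadditive_E_def, THEN conjunct2, THEN conjunct2, THEN conjunct2, THEN conjunct1]
lemmas bE5 = biE[unfolded is_biadditive_E_def, THEN conjunct2, THEN conjunct2, THEN conjunct2, THEN conjunct2, THEN conjunct1]
lemmas bE6 = biE[unfolded is_biadditive_E_def, THEN conjunct2, THEN conjunct2, THEN conjunct2, THEN conjunct2, THEN conjunct2, THEN conjunct1]
lemmas bE7 = biE[unfolded is_biadditive_E_def, THEN conjunct2, THEN conjunct2, THEN conjunct2, THEN conjunct2, THEN conjunct2, THEN conjunct2, THEN conjunct1]
lemmas bE8 = biE[unfolded is_biadditive_E_def, THEN conjunct2, THEN conjunct2, THEN conjunct2, THEN conjunct2, THEN conjunct2, THEN conjunct2, THEN conjunct2, THEN conjunct1]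
lemmas bE9 = biE[unfolded is_biadditive_E_def, THEN conjunct2, THEN conjunct2, THEN conjunct2, THEN conjunct2, THEN conjunct2, THEN conjunct2, THEN conjunct2, THEN conjunct2, THEN conjunct1]
lemmas bE10 = biE[unfolded is_biadditive_E_def, THEN conjunct2, THEN conjunct2, THEN conjunct2, THEN conjunct2, THEN conjunct2, THEN conjunct2, THEN conjunct2, THEN conjunct2, THEN conjunct2, THEN conjunct1]
lemmas bE11 = biE[unfolded is_biadditive_E_def, THEN conjunct2, THEN conjunct2, THEN conjunct2, THEN conjunct2, THEN conjunct2, THEN conjunct2, THEN conjunct2, THEN conjunct2, THEN conjunct2, THEN conjunct2]
lemmas rZ1 = realz[unfolded is_realization_def, THEN conjunct1]
lemmas rZ2 = realz[unfolded is_realization_def, THEN conjunct2, THEN conjunct1]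
lemmas rZ3 = realz[unfolded is_realization_def, THEN conjunct2, THEN conjunct2, THEN conjunct1]
lemmas rZ4 = realz[unfolded is_realization_def, THEN conjunct2, THEN conjunct2, THEN conjunct2, THEN conjunct1]
lemmas rZ5 = realz[unfolded is_realization_def, THEN conjunct2, THEN conjunct2, THEN conjunct2, THEN conjunct2]
lemmas aR1 = areal[unfolded additive_realization_def, THEN conjunct1]
lemmas aR2 = areal[unfolded additive_realization_def, THEN conjunct2]

lemma extgrp: "C \<in> obj T \<Longrightarrow> A \<in> obj T \<Longrightarrow>
        ezero T C A \<in> Ext T C A \<and>
        (\<forall>d \<in> Ext T C A. \<forall>e \<in> Ext T C A. eadd T C A d e \<in> Ext T C A) \<and>
        (\<forall>d \<in> Ext T C A. \<forall>e \<in> Ext T C A. \<forall>f \<in> Ext T C A.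
            eadd T C A (eadd T C A d e) f = eadd T C A d (eadd T C A e f)) \<and>
        (\<forall>d \<in> Ext T C A. \<forall>e \<in> Ext T C A. eadd T C A d e = eadd T C A e d) \<and>
        (\<forall>d \<in> Ext T C A. eadd T C A d (ezero T C A) = d) \<and>
        (\<forall>d \<in> Ext T C A. \<exists>e \<in> Ext T C A. eadd T C A d e = ezero T C A)"
  using bE1 by blast
lemma ez_in: "C \<in> obj T \<Longrightarrow> A \<in> obj T \<Longrightarrow> ezero T C A \<in> Ext T C A"
  using extgrp by meson
lemma eadd_in: "C \<in> obj T \<Longrightarrow> A \<in> obj T \<Longrightarrow> d \<in> Ext T C A \<Longrightarrow> e \<in> Ext T C A \<Longrightarrow> eadd T C A d e \<in> Ext T C A"
  using extgrp by meson
lemma eadd_assoc: "C \<in> obj T \<Longrightarrow> A \<in> obj T \<Longrightarrow> d \<in> Ext T C A \<Longrightarrow> e \<in> Ext T C A \<Longrightarrow> f \<in> Ext T C A \<Longrightarrow>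
   eadd T C A (eadd T C A d e) f = eadd T C A d (eadd T C A e f)"
  using extgrp by meson
lemma eadd_comm: "C \<in> obj T \<Longrightarrow> A \<in> obj T \<Longrightarrow> d \<in> Ext T C A \<Longrightarrow> e \<in> Ext T C A \<Longrightarrow> eadd T C A d e = eadd T C A e d"
  using extgrp by meson
lemma eadd_zero: "C \<in> obj T \<Longrightarrow> A \<in> obj T \<Longrightarrow> d \<in> Ext T C A \<Longrightarrow> eadd T C A d (ezero T C A) = d"
  using extgrp by meson
lemma eadd_inv: "C \<in> obj T \<Longrightarrow> A \<in> obj T \<Longrightarrow> d \<in> Ext T C A \<Longrightarrow> \<exists>e \<in> Ext T C A. eadd T C A d e = ezero T C A"
  using extgrp by meson
lemma push_in: "C \<in> obj T \<Longrightarrow> a \<in> hom T A B \<Longrightarrow> d \<in> Ext T C A \<Longrightarrow> epush T C a d \<in> Ext T C B"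
  using bE2 by blast
lemma pull_in: "A \<in> obj T \<Longrightarrow> c \<in> hom T C' C \<Longrightarrow> d \<in> Ext T C A \<Longrightarrow> epull T A c d \<in> Ext T C' A"
  using bE3 by blast
lemma push_id: "C \<in> obj T \<Longrightarrow> A \<in> obj T \<Longrightarrow> d \<in> Ext T C A \<Longrightarrow> epush T C (idm T A) d = d"
  using bE4 by blast
lemma pull_id: "C \<in> obj T \<Longrightarrow> A \<in> obj T \<Longrightarrow> d \<in> Ext T C A \<Longrightarrow> epull T A (idm T C) d = d"
  using bE4 by blast
lemma push_cmp: "C \<in> obj T \<Longrightarrow> a \<in> hom T A B \<Longrightarrow> b \<in> hom T B D \<Longrightarrow> d \<in> Ext T C A \<Longrightarrow>
        epush T C (cmp T b a) d = epush T C b (epush T C a d)"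
  using bE5 by blast
lemma pull_cmp: "A \<in> obj T \<Longrightarrow> c \<in> hom T C' C \<Longrightarrow> c' \<in> hom T C'' C' \<Longrightarrow>
        d \<in> Ext T C A \<Longrightarrow> epull T A (cmp T c c') d = epull T A c' (epull T A c d)"
  using bE6 by blast
lemma push_pull: "a \<in> hom T A B \<Longrightarrow> c \<in> hom T C' C \<Longrightarrow> d \<in> Ext T C A \<Longrightarrow>
        epush T C' a (epull T A c d) = epull T B c (epush T C a d)"
  using bE7 by blast
lemma push_add: "C \<in> obj T \<Longrightarrow> a \<in> hom T A B \<Longrightarrow> d \<in> Ext T C A \<Longrightarrow> e \<in> Ext T C A \<Longrightarrow>
        epush T C a (eadd T C A d e) = eadd T C B (epush T C a d) (epush T C a e)"
  using bE8 by blast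
lemma pull_add: "A \<in> obj T \<Longrightarrow> c \<in> hom T C' C \<Longrightarrow> d \<in> Ext T C A \<Longrightarrow> e \<in> Ext T C A \<Longrightarrow>
        epull T A c (eadd T C A d e) = eadd T C' A (epull T A c d) (epull T A c e)"
  using bE9 by blast
lemma push_madd: "C \<in> obj T \<Longrightarrow> a \<in> hom T A B \<Longrightarrow> a' \<in> hom T A B \<Longrightarrow> d \<in> Ext T C A \<Longrightarrow>
        epush T C (madd T a a') d = eadd T C B (epush T C a d) (epush T C a' d)"
  using bE10 by blast
lemma pull_madd: "A \<in> obj T \<Longrightarrow> c \<in> hom T C' C \<Longrightarrow> c' \<in> hom T C' C \<Longrightarrow> d \<in> Ext T C A \<Longrightarrow>
        epull T A (madd T c c') d = eadd T C' A (epull T A c d) (epull T A c' d)"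
  using bE11 by blast

lemma real_etri: "real T d x y \<Longrightarrow> etri T (mdom T x) (mcod T x) (mcod T y) x y d"
  using rZ1 by blast
lemma realize: "C \<in> obj T \<Longrightarrow> A \<in> obj T \<Longrightarrow> d \<in> Ext T C A \<Longrightarrow> \<exists>B x y. etri T A B C x y d"
  using rZ2 by blast
lemma real_uniq: "etri T A B C x y d \<Longrightarrow> etri T A B' C x' y' d \<Longrightarrow>
        (\<exists>b. is_iso T B B' b \<and> cmp T b x = x' \<and> cmp T y' b = y)"
  using rZ3 by blast
lemma real_morph: "etri T A B C x y d \<Longrightarrow> etri T A' B' C' x' y' d' \<Longrightarrow>
        a \<in> hom T A A' \<Longrightarrow> c \<in> hom T C C' \<Longrightarrow> epush T C a d = epull T A' c d' \<Longrightarrow>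
        (\<exists>b \<in> hom T B B'. cmp T b x = cmp T x' a \<and> cmp T y' b = cmp T c y)"
  using rZ5 by blast
lemma split_real: "is_biproduct T A C S i1 i2 p1 p2 \<Longrightarrow> real T (ezero T C A) i1 p2"
  using aR1 by blast
lemma ET3: "etri T A B C x y d \<Longrightarrow> etri T A' B' C' x' y' d' \<Longrightarrow>
        a \<in> hom T A A' \<Longrightarrow> b \<in> hom T B B' \<Longrightarrow> cmp T b x = cmp T x' a \<Longrightarrow>
        (\<exists>c \<in> hom T C C'. cmp T c y = cmp T y' b \<and> epush T C a d = epull T A' c d')"
  using et3 unfolding ET3_def by blast

lemma ET4_rule: "etri T A B D f f' d \<Longrightarrow> etri T B C F g g' d' \<Longrightarrow>
        (\<exists>E h h' dd e d''.
           etri T A C E h h' d'' \<and> dd \<in> hom T D E \<and> e \<in> hom T E F \<and>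
           etri T D E F dd e (epush T F f' d') \<and>
           epull T A dd d'' = d \<and>
           epush T E f d'' = epull T B e d' \<and>
           h = cmp T g f \<and> cmp T h' g = cmp T dd f' \<and> cmp T e h' = g')"
  using et4 unfolding ET4_def by blast
lemma ET4op_rule: "etri T D A B f' f d \<Longrightarrow> etri T F B C g' g d' \<Longrightarrow>
        (\<exists>E h h' dd e d''.
           etri T E A C h' h d'' \<and> dd \<in> hom T D E \<and> e \<in> hom T E F \<and>
           etri T D E F dd e (epull T D g' d) \<and>
           d' = epush T C e d'' \<and>
           epush T B dd d = epull T E g d'' \<and>
           h = cmp T g f \<and> cmp T h' dd = f' \<and> cmp T f h' = cmp T g' e)"
  using et4op unfolding ET4op_def by blast

lemma hom_cancel: assumes x: "x \<in> hom T A B" and e: "madd T x x = x" shows "x = mzero T A B"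
proof -
  obtain g where g: "g \<in> hom T A B" "madd T x g = mzero T A B" using add_inv[OF x] by blast
  have "mzero T A B = madd T (madd T x x) g" using e g by simp
  also have "\<dots> = madd T x (madd T x g)" using add_assoc[OF x x g(1)] .
  also have "\<dots> = x" using g add_zero[OF x] by simp
  finally show ?thesis by simp
qed

lemma zz: "A \<in> obj T \<Longrightarrow> B \<in> obj T \<Longrightarrow> madd T (mzero T A B) (mzero T A B) = mzero T A B"
  using add_zero zero_hom by blast

lemma cmp_zero_r: assumes f: "f \<in> hom T B C" and A: "A \<in> obj T" shows "cmp T f (mzero T A B) = mzero T A C"
proof -
  have B: "B \<in> obj T" using hom_obj[OF f] by simp
  have z: "mzero T A B \<in> hom T A B" using zero_hom[OF A B] .
  have h: "cmp T f (mzero T A B) \<in> hom T A C" using cmp_hom[OF z f] .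
  have "cmp T f (mzero T A B) = cmp T f (madd T (mzero T A B) (mzero T A B))" using zz[OF A B] by simp
  also have "\<dots> = madd T (cmp T f (mzero T A B)) (cmp T f (mzero T A B))" using distl[OF z z f] .
  finally show ?thesis using hom_cancel[OF h] by simp
qed

lemma cmp_zero_l: assumes f: "f \<in> hom T A B" and C: "C \<in> obj T" shows "cmp T (mzero T B C) f = mzero T A C"
proof -
  have B: "B \<in> obj T" using hom_obj[OF f] by simp
  have z: "mzero T B C \<in> hom T B C" using zero_hom[OF B C] .
  have h: "cmp T (mzero T B C) f \<in> hom T A C" using cmp_hom[OF f z] .
  have "cmp T (mzero T B C) f = cmp T (madd T (mzero T B C) (mzero T B C)) f" using zz[OF B C] by simp
  also have "\<dots> = madd T (cmp T (mzero T B C) f) (cmp T (mzero T B C) f)" using distr[OF z z f] .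
  finally show ?thesis using hom_cancel[OF h] by simp
qed

lemma ext_cancel: assumes C: "C \<in> obj T" and A: "A \<in> obj T" and x: "x \<in> Ext T C A" and e: "eadd T C A x x = x"
  shows "x = ezero T C A"
proof -
  obtain g where g: "g \<in> Ext T C A" "eadd T C A x g = ezero T C A" using eadd_inv[OF C A x] by blast
  have "ezero T C A = eadd T C A (eadd T C A x x) g" using e g by simp
  also have "\<dots> = eadd T C A x (eadd T C A x g)" using eadd_assoc[OF C A x x g(1)] .
  also have "\<dots> = x" using g eadd_zero[OF C A x] by simp
  finally show ?thesis by simp
qed

lemma push_zero_mor: assumes C: "C \<in> obj T" and A: "A \<in> obj T" and B: "B \<in> obj T" and d: "d \<in> Ext T C A"
  shows "epush T C (mzero T A B) d = ezero T C B"
proof -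
  have z: "mzero T A B \<in> hom T A B" using zero_hom[OF A B] .
  have h: "epush T C (mzero T A B) d \<in> Ext T C B" using push_in[OF C z d] .
  have "epush T C (mzero T A B) d = epush T C (madd T (mzero T A B) (mzero T A B)) d" using zz[OF A B] by simp
  also have "\<dots> = eadd T C B (epush T C (mzero T A B) d) (epush T C (mzero T A B) d)" using push_madd[OF C z z d] .
  finally show ?thesis using ext_cancel[OF C B h] by simp
qed

lemma pull_zero_mor: assumes C: "C \<in> obj T" and A: "A \<in> obj T" and C': "C' \<in> obj T" and d: "d \<in> Ext T C A"
  shows "epull T A (mzero T C' C) d = ezero T C' A"
proof -
  have z: "mzero T C' C \<in> hom T C' C" using zero_hom[OF C' C] .
  have h: "epull T A (mzero T C' C) d \<in> Ext T C' A" using pull_in[OF A z d] .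
  have "epull T A (mzero T C' C) d = epull T A (madd T (mzero T C' C) (mzero T C' C)) d" using zz[OF C' C] by simp
  also have "\<dots> = eadd T C' A (epull T A (mzero T C' C) d) (epull T A (mzero T C' C) d)" using pull_madd[OF A z z d] .
  finally show ?thesis using ext_cancel[OF C' A h] by simp
qed


lemma push_ez: assumes C: "C \<in> obj T" and a: "a \<in> hom T A B" shows "epush T C a (ezero T C A) = ezero T C B"
proof -
  have A: "A \<in> obj T" and B: "B \<in> obj T" using hom_obj[OF a] by auto
  have z: "ezero T C A \<in> Ext T C A" using ez_in[OF C A] .
  have h: "epush T C a (ezero T C A) \<in> Ext T C B" using push_in[OF C a z] .
  have "epush T C a (ezero T C A) = epush T C a (eadd T C A (ezero T C A) (ezero T C A))" using eadd_zero[OF C A z] by simp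
  also have "\<dots> = eadd T C B (epush T C a (ezero T C A)) (epush T C a (ezero T C A))" using push_add[OF C a z z] .
  finally show ?thesis using ext_cancel[OF C B h] by simp
qed

lemma pull_ez: assumes A: "A \<in> obj T" and c: "c \<in> hom T C' C" shows "epull T A c (ezero T C A) = ezero T C' A"
proof -
  have C: "C \<in> obj T" and C': "C' \<in> obj T" using hom_obj[OF c] by auto
  have z: "ezero T C A \<in> Ext T C A" using ez_in[OF C A] .
  have h: "epull T A c (ezero T C A) \<in> Ext T C' A" using pull_in[OF A c z] .
  have "epull T A c (ezero T C A) = epull T A c (eadd T C A (ezero T C A) (ezero T C A))" using eadd_zero[OF C A z] by simp
  also have "\<dots> = eadd T C' A (epull T A c (ezero T C A)) (epull T A c (ezero T C A))" using pull_add[OF A c z z] .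
  finally show ?thesis using ext_cancel[OF C' A h] by simp
qed

lemma zobj: "is_zero_obj T Z \<Longrightarrow> Z \<in> obj T \<and> idm T Z = mzero T Z Z"
  unfolding is_zero_obj_def by simp

lemma zero_to: assumes Z: "is_zero_obj T Z" and f: "f \<in> hom T A Z" shows "f = mzero T A Z"
proof -
  have "f = cmp T (idm T Z) f" using id_l[OF f] by simp
  also have "\<dots> = cmp T (mzero T Z Z) f" using zobj[OF Z] by simp
  also have "\<dots> = mzero T A Z" using cmp_zero_l[OF f] zobj[OF Z] by simp
  finally show ?thesis .
qed

lemma zero_from: assumes Z: "is_zero_obj T Z" and f: "f \<in> hom T Z A" shows "f = mzero T Z A"
proof -
  have "f = cmp T f (idm T Z)" using id_r[OF f] by simp
  also have "\<dots> = cmp T f (mzero T Z Z)" using zobj[OF Z] by simp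
  also have "\<dots> = mzero T Z A" using cmp_zero_r[OF f] zobj[OF Z] by simp
  finally show ?thesis .
qed

lemma ext_from_zero: assumes Z: "is_zero_obj T Z" and A: "A \<in> obj T" and d: "d \<in> Ext T Z A" shows "d = ezero T Z A"
proof -
  have Zo: "Z \<in> obj T" using zobj[OF Z] by simp
  have "d = epull T A (idm T Z) d" using pull_id[OF Zo A d] by simp
  also have "\<dots> = epull T A (mzero T Z Z) d" using zobj[OF Z] by simp
  also have "\<dots> = ezero T Z A" using pull_zero_mor[OF Zo A Zo d] .
  finally show ?thesis .
qed

lemma bip_zl: assumes Z: "is_zero_obj T Z" and C: "C \<in> obj T"
  shows "is_biproduct T Z C C (mzero T Z C) (idm T C) (mzero T C Z) (idm T C)"
proof -
  have Zo: "Z \<in> obj T" using zobj[OF Z] by simp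
  have a: "mzero T Z C \<in> hom T Z C" "mzero T C Z \<in> hom T C Z" "idm T C \<in> hom T C C"
    using zero_hom Zo C id_hom by auto
  have "cmp T (mzero T C Z) (mzero T Z C) = idm T Z"
    using cmp_zero_l[OF a(1) Zo] zobj[OF Z] by simp
  moreover have "cmp T (mzero T C Z) (idm T C) = mzero T C Z" using id_r[OF a(2)] .
  moreover have "cmp T (idm T C) (mzero T Z C) = mzero T Z C" using id_l[OF a(1)] .
  moreover have "madd T (cmp T (mzero T Z C) (mzero T C Z)) (cmp T (idm T C) (idm T C)) = idm T C"
  proof -
    have "cmp T (mzero T Z C) (mzero T C Z) = mzero T C C" using cmp_zero_l[OF a(2) C] .
    moreover have "cmp T (idm T C) (idm T C) = idm T C" using id_l[OF a(3)] .
    moreover have "madd T (mzero T C C) (idm T C) = idm T C"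
      using add_comm[OF zero_hom[OF C C] a(3)] add_zero[OF a(3)] by simp
    ultimately show ?thesis by simp
  qed
  ultimately show ?thesis unfolding is_biproduct_def using a id_l[OF a(3)] by simp
qed

lemma bip_zr: assumes Z: "is_zero_obj T Z" and B: "B \<in> obj T"
  shows "is_biproduct T B Z B (idm T B) (mzero T Z B) (idm T B) (mzero T B Z)"
proof -
  have Zo: "Z \<in> obj T" using zobj[OF Z] by simp
  have a: "mzero T Z B \<in> hom T Z B" "mzero T B Z \<in> hom T B Z" "idm T B \<in> hom T B B"
    using zero_hom Zo B id_hom by auto
  have "cmp T (mzero T B Z) (mzero T Z B) = idm T Z"
    using cmp_zero_l[OF a(1) Zo] zobj[OF Z] by simp
  moreover have "cmp T (idm T B) (mzero T Z B) = mzero T Z B" using id_l[OF a(1)] .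
  moreover have "cmp T (mzero T B Z) (idm T B) = mzero T B Z" using id_r[OF a(2)] .
  moreover have "madd T (cmp T (idm T B) (idm T B)) (cmp T (mzero T Z B) (mzero T B Z)) = idm T B"
  proof -
    have "cmp T (mzero T Z B) (mzero T B Z) = mzero T B B" using cmp_zero_l[OF a(2) B] .
    moreover have "cmp T (idm T B) (idm T B) = idm T B" using id_l[OF a(3)] .
    moreover have "madd T (idm T B) (mzero T B B) = idm T B"
      using add_zero[OF a(3)] by simp
    ultimately show ?thesis by simp
  qed
  ultimately show ?thesis unfolding is_biproduct_def using a id_l[OF a(3)] by simp
qed

lemma etriD: "etri T A B C x y d \<Longrightarrow> A \<in> obj T \<and> B \<in> obj T \<and> C \<in> obj T \<and> x \<in> hom T A B \<and> y \<in> hom T B C \<and> d \<in> Ext T C A"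
  unfolding etri_def using hom_obj by blast

lemma confD: "conflation T A B C \<Longrightarrow> A \<in> obj T \<and> B \<in> obj T \<and> C \<in> obj T"
  unfolding conflation_def using etriD by blast

lemma split_etri: assumes bp: "is_biproduct T A C S i1 i2 p1 p2" shows "etri T A S C i1 p2 (ezero T C A)"
proof -
  have "i1 \<in> hom T A S" "p2 \<in> hom T S C" using bp unfolding is_biproduct_def by auto
  hence "mdom T i1 = A" "mcod T i1 = S" "mcod T p2 = C" unfolding hom_def by auto
  thus ?thesis using real_etri[OF split_real[OF bp]] by simp
qed

lemma infl_push: assumes t: "etri T A B C x y d" shows "epush T C x d = ezero T C B"
proof -
  obtain Z where Z: "is_zero_obj T Z" using zero_ex by blast
  have o: "A \<in> obj T" "B \<in> obj T" "C \<in> obj T" "x \<in> hom T A B" using etriD[OF t] by auto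
  have t2: "etri T B B Z (idm T B) (mzero T B Z) (ezero T Z B)" using split_etri[OF bip_zr[OF Z o(2)]] .
  have "cmp T (idm T B) x = cmp T (idm T B) x" by simp
  from ET3[OF t t2 o(4) id_hom[OF o(2)] this] obtain c where c: "c \<in> hom T C Z" "epush T C x d = epull T B c (ezero T Z B)" by blast
  thus ?thesis using pull_ez[OF o(2) c(1)] by simp
qed

lemma comp_zero: assumes t: "etri T A B C x y d" shows "cmp T y x = mzero T A C"
proof -
  obtain Z where Z: "is_zero_obj T Z" using zero_ex by blast
  have Zo: "Z \<in> obj T" using zobj[OF Z] by simp
  have o: "A \<in> obj T" "B \<in> obj T" "C \<in> obj T" "x \<in> hom T A B" "y \<in> hom T B C" "d \<in> Ext T C A" using etriD[OF t] by auto
  have t2: "etri T A A Z (idm T A) (mzero T A Z) (ezero T Z A)" using split_etri[OF bip_zr[OF Z o(1)]] .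
  have "epush T Z (idm T A) (ezero T Z A) = epull T A (mzero T Z C) d"
    using push_id[OF Zo o(1) ez_in[OF Zo o(1)]] pull_zero_mor[OF o(3) o(1) Zo o(6)] by simp
  from real_morph[OF t2 t id_hom[OF o(1)] zero_hom[OF Zo o(3)] this] obtain b where
    b: "b \<in> hom T A B" "cmp T b (idm T A) = cmp T x (idm T A)" "cmp T y b = cmp T (mzero T Z C) (mzero T A Z)" by blast
  have "b = x" using b(2) id_r[OF b(1)] id_r[OF o(4)] by simp
  thus ?thesis using b(3) cmp_zero_l[OF zero_hom[OF o(1) Zo] o(3)] by simp
qed


lemma split_bip:
  assumes t: "etri T A B C x y (ezero T C A)"
  shows "\<exists>s r. is_biproduct T A C B x s r y"
proof -
  have A: "A \<in> obj T" and C: "C \<in> obj T" and x: "x \<in> hom T A B" and y: "y \<in> hom T B C" and B: "B \<in> obj T"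
    using etriD[OF t] by auto
  obtain S i1 i2 p1 p2 where S: "S \<in> obj T" and bp: "is_biproduct T A C S i1 i2 p1 p2" using bip_ex[OF A C] by blast
  have i1: "i1 \<in> hom T A S" and i2: "i2 \<in> hom T C S" and p1: "p1 \<in> hom T S A" and p2: "p2 \<in> hom T S C"
   and e1: "cmp T p1 i1 = idm T A" and e2: "cmp T p2 i2 = idm T C" and e3: "cmp T p1 i2 = mzero T C A"
   and e4: "cmp T p2 i1 = mzero T A C" and e5: "madd T (cmp T i1 p1) (cmp T i2 p2) = idm T S"
    using bp unfolding is_biproduct_def by auto
  have ts: "etri T A S C i1 p2 (ezero T C A)" by (rule split_etri[OF bp])
  obtain b where b: "is_iso T S B b" "cmp T b i1 = x" "cmp T y b = p2" using real_uniq[OF ts t] by blast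
  obtain g where bh: "b \<in> hom T S B" and g: "g \<in> hom T B S" "cmp T g b = idm T S" "cmp T b g = idm T B"
    using b(1) unfolding is_iso_def by blast
  define s where "s = cmp T b i2"
  define r where "r = cmp T p1 g"
  have sh: "s \<in> hom T C B" using cmp_hom[OF i2 bh] s_def by simp
  have rh: "r \<in> hom T B A" using cmp_hom[OF g(1) p1] r_def by simp
  have yg: "y = cmp T p2 g"
  proof -
    have "y = cmp T y (cmp T b g)" using g(3) id_r[OF y] by simp
    also have "\<dots> = cmp T (cmp T y b) g" using assoc[OF g(1) bh y] .
    finally show ?thesis using b(3) by simp
  qed
  have pgb: "cmp T (cmp T p1 g) b = p1" using assoc[OF bh g(1) p1] g(2) id_r[OF p1] by simp
  have 1: "cmp T r x = idm T A"
    using assoc[OF i1 bh rh] unfolding r_def using pgb b(2) e1 by (simp add: r_def)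
  have 2: "cmp T y s = idm T C"
    using assoc[OF i2 bh y] b(3) e2 s_def by simp
  have 3: "cmp T r s = mzero T C A"
    using assoc[OF i2 bh rh] unfolding r_def s_def using pgb e3 by simp
  have 4: "cmp T y x = mzero T A C" using b(2) assoc[OF i1 bh y] b(3) e4 by simp
  have 5: "madd T (cmp T x r) (cmp T s y) = idm T B"
  proof -
    have q: "cmp T i1 p1 \<in> hom T S S" "cmp T i2 p2 \<in> hom T S S" using cmp_hom i1 p1 i2 p2 by blast+
    have xr: "cmp T x r = cmp T b (cmp T (cmp T i1 p1) g)"
      using b(2) assoc[OF g(1) p1 i1] assoc[OF p1 i1 bh] r_def assoc[OF g(1) q(1) bh] assoc[OF g(1) p1 cmp_hom[OF i1 bh]]
      by (metis )
    have sy: "cmp T s y = cmp T b (cmp T (cmp T i2 p2) g)"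
      using yg s_def assoc[OF g(1) p2 i2] assoc[OF g(1) q(2) bh] assoc[OF g(1) p2 cmp_hom[OF i2 bh]] assoc[OF p2 i2 bh]
      by (metis)
    have "madd T (cmp T x r) (cmp T s y) = cmp T b (madd T (cmp T (cmp T i1 p1) g) (cmp T (cmp T i2 p2) g))"
      using xr sy distl[OF cmp_hom[OF g(1) q(1)] cmp_hom[OF g(1) q(2)] bh] by simp
    also have "\<dots> = cmp T b (cmp T (idm T S) g)" using distr[OF q g(1)] e5 by simp
    also have "\<dots> = idm T B" using id_l[OF g(1)] g(3) by simp
    finally show ?thesis .
  qed
  have "is_biproduct T A C B x s r y" unfolding is_biproduct_def using x sh rh y 1 2 3 4 5 by simp
  thus ?thesis by blast
qed

lemma ext0_split: assumes t: "etri T A B C x y d" and z: "Ext_zero T C A"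
  shows "\<exists>s r. is_biproduct T A C B x s r y"
proof -
  have "d = ezero T C A" using z etriD[OF t] unfolding Ext_zero_def by auto
  thus ?thesis using split_bip t by simp
qed

lemma ext_zero_retract: assumes s: "s \<in> hom T Y M" and e: "e \<in> hom T M Y" and es: "cmp T e s = idm T Y"
  and X: "X \<in> obj T" and z: "Ext_zero T X M" shows "Ext_zero T X Y"
proof -
  have Y: "Y \<in> obj T" and M: "M \<in> obj T" using hom_obj[OF s] by auto
  have "\<forall>t \<in> Ext T X Y. t = ezero T X Y"
  proof
    fix t assume t: "t \<in> Ext T X Y"
    have "t = epush T X (cmp T e s) t" using push_id[OF X Y t] es by simp
    also have "\<dots> = epush T X e (epush T X s t)" using push_cmp[OF X s e t] .
    also have "\<dots> = epush T X e (ezero T X M)" using z push_in[OF X s t] unfolding Ext_zero_def by auto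
    also have "\<dots> = ezero T X Y" using push_ez[OF X e] .
    finally show "t = ezero T X Y" .
  qed
  thus ?thesis unfolding Ext_zero_def using ez_in[OF X Y] by blast
qed

lemma iso_sym: "is_iso T A B f \<Longrightarrow> \<exists>g. is_iso T B A g"
  unfolding is_iso_def by blast

lemma isomorphic_sym: "isomorphic T A B \<Longrightarrow> isomorphic T B A"
  unfolding isomorphic_def using iso_sym by blast

lemma ext_zero_iso: assumes i: "isomorphic T A B" and X: "X \<in> obj T" and z: "Ext_zero T X A"
  shows "Ext_zero T X B"
proof -
  obtain f g where f: "f \<in> hom T A B" "g \<in> hom T B A" "cmp T f g = idm T B"
    using i unfolding isomorphic_def is_iso_def by blast
  show ?thesis using ext_zero_retract[OF f(2) f(1) f(3) X z] .
qed

lemma ext_zero_bip: assumes bp: "is_biproduct T A B S i1 i2 p1 p2" and X: "X \<in> obj T"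
  and za: "Ext_zero T X A" and zb: "Ext_zero T X B" shows "Ext_zero T X S"
proof -
  have i1: "i1 \<in> hom T A S" and i2: "i2 \<in> hom T B S" and p1: "p1 \<in> hom T S A" and p2: "p2 \<in> hom T S B"
   and e5: "madd T (cmp T i1 p1) (cmp T i2 p2) = idm T S"
    using bp unfolding is_biproduct_def by auto
  have S: "S \<in> obj T" and A: "A \<in> obj T" and B: "B \<in> obj T" using hom_obj i1 i2 by auto
  have "\<forall>t \<in> Ext T X S. t = ezero T X S"
  proof
    fix t assume t: "t \<in> Ext T X S"
    have "t = epush T X (madd T (cmp T i1 p1) (cmp T i2 p2)) t" using push_id[OF X S t] e5 by simp
    also have "\<dots> = eadd T X S (epush T X (cmp T i1 p1) t) (epush T X (cmp T i2 p2) t)"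
      using push_madd[OF X cmp_hom[OF p1 i1] cmp_hom[OF p2 i2] t] .
    also have "\<dots> = eadd T X S (epush T X i1 (epush T X p1 t)) (epush T X i2 (epush T X p2 t))"
      using push_cmp[OF X p1 i1 t] push_cmp[OF X p2 i2 t] by simp
    also have "\<dots> = eadd T X S (epush T X i1 (ezero T X A)) (epush T X i2 (ezero T X B))"
      using za zb push_in[OF X p1 t] push_in[OF X p2 t] unfolding Ext_zero_def by auto
    also have "\<dots> = ezero T X S" using push_ez[OF X i1] push_ez[OF X i2] eadd_zero[OF X S ez_in[OF X S]] by simp
    finally show "t = ezero T X S" .
  qed
  thus ?thesis unfolding Ext_zero_def using ez_in[OF X S] by blast
qed

lemma inj_ext_zero: assumes I: "injective T I" and Y: "Y \<in> obj T" shows "Ext_zero T Y I"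
proof -
  have Io: "I \<in> obj T" using I unfolding injective_def by simp
  have "\<forall>t \<in> Ext T Y I. t = ezero T Y I"
  proof
    fix t assume t: "t \<in> Ext T Y I"
    obtain B x y where tr: "etri T I B Y x y t" using realize[OF Y Io t] by blast
    obtain g where g: "g \<in> hom T B I" "cmp T g x = idm T I"
      using I id_hom[OF Io] tr unfolding injective_def by blast
    have x: "x \<in> hom T I B" using etriD[OF tr] by simp
    have "t = epush T Y (cmp T g x) t" using push_id[OF Y Io t] g by simp
    also have "\<dots> = epush T Y g (epush T Y x t)" using push_cmp[OF Y x g(1) t] .
    also have "\<dots> = ezero T Y I" using infl_push[OF tr] push_ez[OF Y g(1)] by simp
    finally show "t = ezero T Y I" .
  qed
  thus ?thesis unfolding Ext_zero_def using ez_in[OF Y Io] by blast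
qed

lemma inj_retract: assumes I: "injective T I" and s: "s \<in> hom T L I" and r: "r \<in> hom T I L"
  and rs: "cmp T r s = idm T L" shows "injective T L"
  unfolding injective_def
proof (intro conjI allI impI)
  show "L \<in> obj T" using hom_obj[OF s] by simp
next
  fix A B C x y d f assume t: "etri T A B C x y d" and f: "f \<in> hom T A L"
  obtain g where g: "g \<in> hom T B I" "cmp T g x = cmp T s f" using I t cmp_hom[OF f s] unfolding injective_def by blast
  have x: "x \<in> hom T A B" using etriD[OF t] by simp
  have "cmp T (cmp T r g) x = f"
    using assoc[OF x g(1) r] g(2) assoc[OF f s r] rs id_l[OF f] by simp
  thus "\<exists>g\<in>hom T B L. cmp T g x = f" using cmp_hom[OF g(1) r] by blast
qed

lemma inj_iso: assumes I: "injective T I" and i: "isomorphic T I L" shows "injective T L"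
proof -
  obtain f g where f: "f \<in> hom T I L" "g \<in> hom T L I" "cmp T f g = idm T L"
    using i unfolding isomorphic_def is_iso_def by blast
  show ?thesis using inj_retract[OF I f(2) f(1) f(3)] .
qed


lemma add_swap4: assumes "p \<in> hom T A B" "q \<in> hom T A B" "v \<in> hom T A B" "w \<in> hom T A B"
  shows "madd T (madd T p q) (madd T v w) = madd T (madd T p v) (madd T q w)"
proof -
  have "madd T (madd T p q) (madd T v w) = madd T p (madd T q (madd T v w))"
    using add_assoc assms add_hom by blast
  also have "\<dots> = madd T p (madd T (madd T q v) w)" using add_assoc assms by simp
  also have "\<dots> = madd T p (madd T (madd T v q) w)" using add_comm assms by metis
  also have "\<dots> = madd T p (madd T v (madd T q w))" using add_assoc assms by simp
  also have "\<dots> = madd T (madd T p v) (madd T q w)" using add_assoc assms add_hom by metis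
  finally show ?thesis .
qed

lemma exact_left:
  assumes t2: "etri T A B2 C2 x2 y2 d2" and C1: "C1 \<in> obj T" and th: "th \<in> Ext T C1 A"
  and z: "epush T C1 x2 th = ezero T C1 B2"
  shows "\<exists>t \<in> hom T C1 C2. th = epull T A t d2"
proof -
  have o: "A \<in> obj T" "B2 \<in> obj T" "C2 \<in> obj T" "x2 \<in> hom T A B2" "y2 \<in> hom T B2 C2" "d2 \<in> Ext T C2 A"
    using etriD[OF t2] by auto
  obtain P p q where tp: "etri T A P C1 p q th" using realize[OF C1 o(1) th] by blast
  obtain S i1 i2 p1 p2 where S: "S \<in> obj T" and bp: "is_biproduct T B2 C1 S i1 i2 p1 p2" using bip_ex[OF o(2) C1] by blast
  have ts: "etri T B2 S C1 i1 p2 (ezero T C1 B2)" using split_etri[OF bp] .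
  have i1: "i1 \<in> hom T B2 S" and p1: "p1 \<in> hom T S B2" and e1: "cmp T p1 i1 = idm T B2"
    using bp unfolding is_biproduct_def by auto
  have "epush T C1 x2 th = epull T B2 (idm T C1) (ezero T C1 B2)" using z pull_id[OF C1 o(2) ez_in[OF C1 o(2)]] by simp
  from real_morph[OF tp ts o(4) id_hom[OF C1] this] obtain b' where b': "b' \<in> hom T P S" "cmp T b' p = cmp T i1 x2" by blast
  have pp: "p \<in> hom T A P" using etriD[OF tp] by simp
  define b where "b = cmp T p1 b'"
  have bh: "b \<in> hom T P B2" using cmp_hom[OF b'(1) p1] b_def by simp
  have "cmp T b p = x2" using b_def assoc[OF pp b'(1) p1] b'(2) assoc[OF o(4) i1 p1] e1 id_l[OF o(4)] by simp
  hence "cmp T b p = cmp T x2 (idm T A)" using id_r[OF o(4)] by simp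
  from ET3[OF tp t2 id_hom[OF o(1)] bh this] obtain t where t: "t \<in> hom T C1 C2" "epush T C1 (idm T A) th = epull T A t d2" by blast
  thus ?thesis using push_id[OF C1 o(1) th] by auto
qed

lemma mid_exact:
  assumes t: "etri T A B C x y d" and X: "X \<in> obj T" and th: "th \<in> Ext T X B"
  and z: "epush T X y th = ezero T X C"
  shows "\<exists>al \<in> Ext T X A. th = epush T X x al"
proof -
  have o: "A \<in> obj T" "B \<in> obj T" "C \<in> obj T" "x \<in> hom T A B" "y \<in> hom T B C" "d \<in> Ext T C A"
    using etriD[OF t] by auto
  obtain M m e where tm: "etri T B M X m e th" using realize[OF X o(2) th] by blast
  from ET4_rule[OF t tm] obtain E h h' dd e' d'' where
    r: "etri T A M E h h' d''" "dd \<in> hom T C E" "e' \<in> hom T E X"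
       "etri T C E X dd e' (epush T X y th)" "epush T E x d'' = epull T B e' th" by blast
  obtain s r0 where bp: "is_biproduct T C X E dd s r0 e'" using split_bip r(4) z by fastforce
  have s: "s \<in> hom T X E" and es: "cmp T e' s = idm T X" using bp unfolding is_biproduct_def by auto
  have E: "E \<in> obj T" and d'': "d'' \<in> Ext T E A" using etriD[OF r(1)] by auto
  have "th = epull T B (cmp T e' s) th" using pull_id[OF X o(2) th] es by simp
  also have "\<dots> = epull T B s (epull T B e' th)" using pull_cmp[OF o(2) r(3) s th] .
  also have "\<dots> = epush T X x (epull T A s d'')" using r(5) push_pull[OF o(4) s d''] by simp
  finally show ?thesis using pull_in[OF o(1) s d''] by blast
qed

lemma mid_vanish:
  assumes t: "etri T A B C x y d" and X: "X \<in> obj T" and za: "Ext_zero T X A" and zc: "Ext_zero T X C"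
  shows "Ext_zero T X B"
proof -
  have o: "A \<in> obj T" "B \<in> obj T" "C \<in> obj T" "x \<in> hom T A B" "y \<in> hom T B C"
    using etriD[OF t] by auto
  have "\<forall>th \<in> Ext T X B. th = ezero T X B"
  proof
    fix th assume th: "th \<in> Ext T X B"
    have "epush T X y th = ezero T X C" using zc push_in[OF X o(5) th] unfolding Ext_zero_def by auto
    from mid_exact[OF t X th this] obtain al where "al \<in> Ext T X A" "th = epush T X x al" by blast
    thus "th = ezero T X B" using za push_ez[OF X o(4)] unfolding Ext_zero_def by auto
  qed
  thus ?thesis unfolding Ext_zero_def using ez_in[OF X o(2)] by blast
qed

lemma conf_vanish:
  assumes t: "conflation T A B C" and X: "X \<in> obj T" and za: "Ext_zero T X A" and zc: "Ext_zero T X C"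
  shows "Ext_zero T X B"
  using t mid_vanish[OF _ X za zc] unfolding conflation_def by blast


lemma pushout:
  assumes t1: "etri T A B1 C1 x1 y1 d1" and t2: "etri T A B2 C2 x2 y2 d2"
  shows "\<exists>M E'. conflation T B2 M C1 \<and> conflation T E' M C2 \<and> isomorphic T B1 E'"
proof -
  have o1: "A \<in> obj T" "B1 \<in> obj T" "C1 \<in> obj T" "x1 \<in> hom T A B1" "y1 \<in> hom T B1 C1" "d1 \<in> Ext T C1 A"
    using etriD[OF t1] by auto
  have o2: "B2 \<in> obj T" "C2 \<in> obj T" "x2 \<in> hom T A B2" "y2 \<in> hom T B2 C2" "d2 \<in> Ext T C2 A"
    using etriD[OF t2] by auto
  define th0 where "th0 = epush T C1 x2 d1"
  have th0: "th0 \<in> Ext T C1 B2" using push_in[OF o1(3) o2(3) o1(6)] th0_def by simp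
  obtain M m2 e1 where tm: "etri T B2 M C1 m2 e1 th0" using realize[OF o1(3) o2(1) th0] by blast
  from ET4_rule[OF t2 tm] obtain E2 h h' dd e eps where
    r: "etri T A M E2 h h' eps" "dd \<in> hom T C2 E2" "e \<in> hom T E2 C1"
       "etri T C2 E2 C1 dd e (epush T C1 y2 th0)" "epull T A dd eps = d2" "epush T E2 x2 eps = epull T B2 e th0"
    by blast
  have "epush T C1 y2 th0 = epush T C1 (cmp T y2 x2) d1" using push_cmp[OF o1(3) o2(3) o2(4) o1(6)] th0_def by simp
  also have "\<dots> = ezero T C1 C2" using comp_zero[OF t2] push_zero_mor[OF o1(3) o1(1) o2(2) o1(6)] by simp
  finally have "etri T C2 E2 C1 dd e (ezero T C1 C2)" using r(4) by simp
  then obtain s r0 where bp: "is_biproduct T C2 C1 E2 dd s r0 e" using split_bip by blast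
  have s: "s \<in> hom T C1 E2" and r0: "r0 \<in> hom T E2 C2" and es: "cmp T e s = idm T C1"
    and rd: "cmp T r0 dd = idm T C2" and rs: "cmp T r0 s = mzero T C1 C2" and ed: "cmp T e dd = mzero T C2 C1"
    and sum: "madd T (cmp T dd r0) (cmp T s e) = idm T E2"
    using bp unfolding is_biproduct_def by auto
  have E2: "E2 \<in> obj T" and eps: "eps \<in> Ext T E2 A" using etriD[OF r(1)] by auto
  define sg where "sg = epull T A s eps"
  have sg: "sg \<in> Ext T C1 A" using pull_in[OF o1(1) s eps] sg_def by simp
  have "epush T C1 x2 sg = epull T B2 s (epush T E2 x2 eps)" using push_pull[OF o2(3) s eps] sg_def by simp
  also have "\<dots> = epull T B2 (cmp T e s) th0" using r(6) pull_cmp[OF o2(1) r(3) s th0] by simp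
  also have "\<dots> = th0" using es pull_id[OF o1(3) o2(1) th0] by simp
  finally have pxs: "epush T C1 x2 sg = epush T C1 x2 d1" using th0_def by simp
  obtain nu where nu: "nu \<in> Ext T C1 A" "eadd T C1 A sg nu = ezero T C1 A" using eadd_inv[OF o1(3) o1(1) sg] by blast
  define th where "th = eadd T C1 A d1 nu"
  have th: "th \<in> Ext T C1 A" using eadd_in[OF o1(3) o1(1) o1(6) nu(1)] th_def by simp
  have "epush T C1 x2 th = eadd T C1 B2 (epush T C1 x2 d1) (epush T C1 x2 nu)"
    using push_add[OF o1(3) o2(3) o1(6) nu(1)] th_def by simp
  also have "\<dots> = epush T C1 x2 (eadd T C1 A sg nu)" using pxs push_add[OF o1(3) o2(3) sg nu(1)] by simp
  also have "\<dots> = ezero T C1 B2" using nu(2) push_ez[OF o1(3) o2(3)] by simp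
  finally obtain t where t: "t \<in> hom T C1 C2" "th = epull T A t d2" using exact_left[OF t2 o1(3) th] by blast
  obtain u where u: "u \<in> hom T C1 C2" "madd T t u = mzero T C1 C2" using add_inv[OF t(1)] by blast
  define s' where "s' = madd T s (cmp T dd t)"
  define r' where "r' = madd T r0 (cmp T u e)"
  have dt: "cmp T dd t \<in> hom T C1 E2" using cmp_hom[OF t(1) r(2)] .
  have ue: "cmp T u e \<in> hom T E2 C2" using cmp_hom[OF r(3) u(1)] .
  have s': "s' \<in> hom T C1 E2" using add_hom[OF s dt] s'_def by simp
  have r': "r' \<in> hom T E2 C2" using add_hom[OF r0 ue] r'_def by simp
  have sig: "epull T A s' eps = d1"
  proof -
    have "epull T A s' eps = eadd T C1 A sg (epull T A (cmp T dd t) eps)"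
      using pull_madd[OF o1(1) s dt eps] s'_def sg_def by simp
    also have "\<dots> = eadd T C1 A sg th" using pull_cmp[OF o1(1) r(2) t(1) eps] r(5) t(2) by simp
    also have "\<dots> = eadd T C1 A sg (eadd T C1 A nu d1)" using th_def eadd_comm[OF o1(3) o1(1) o1(6) nu(1)] by simp
    also have "\<dots> = eadd T C1 A (eadd T C1 A sg nu) d1" using eadd_assoc[OF o1(3) o1(1) sg nu(1) o1(6)] by simp
    also have "\<dots> = d1" using nu(2) eadd_comm[OF o1(3) o1(1) o1(6) ez_in[OF o1(3) o1(1)]] eadd_zero[OF o1(3) o1(1) o1(6)] by simp
    finally show ?thesis .
  qed
  have b1: "cmp T e s' = idm T C1"
  proof -
    have "cmp T e s' = madd T (cmp T e s) (cmp T e (cmp T dd t))" using distl[OF s dt r(3)] s'_def by simp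
    also have "cmp T e (cmp T dd t) = mzero T C1 C1"
      using assoc[OF t(1) r(2) r(3)] ed cmp_zero_l[OF t(1) o1(3)] by simp
    finally show ?thesis using es add_zero[OF id_hom[OF o1(3)]] by simp
  qed
  have b2: "cmp T r' dd = idm T C2"
  proof -
    have "cmp T r' dd = madd T (cmp T r0 dd) (cmp T (cmp T u e) dd)" using distr[OF r0 ue r(2)] r'_def by simp
    also have "cmp T (cmp T u e) dd = mzero T C2 C2"
      using assoc[OF r(2) r(3) u(1)] ed cmp_zero_r[OF u(1) o2(2)] by simp
    finally show ?thesis using rd add_zero[OF id_hom[OF o2(2)]] by simp
  qed
  have b3: "cmp T r' s' = mzero T C1 C2"
  proof -
    have "cmp T r' s = madd T (cmp T r0 s) (cmp T (cmp T u e) s)" using distr[OF r0 ue s] r'_def by simp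
    also have "\<dots> = madd T (mzero T C1 C2) u" using rs assoc[OF s r(3) u(1)] es id_r[OF u(1)] by simp
    also have "\<dots> = u" using add_comm[OF zero_hom[OF o1(3) o2(2)] u(1)] add_zero[OF u(1)] by simp
    finally have 1: "cmp T r' s = u" .
    have 2: "cmp T r' (cmp T dd t) = t" using assoc[OF t(1) r(2) r'] b2 id_l[OF t(1)] by simp
    have "cmp T r' s' = madd T (cmp T r' s) (cmp T r' (cmp T dd t))" using distl[OF s dt r'] s'_def by simp
    thus ?thesis using 1 2 add_comm[OF t(1) u(1)] u(2) by simp
  qed
  have b4: "madd T (cmp T s' e) (cmp T dd r') = idm T E2"
  proof -
    have se: "cmp T s e \<in> hom T E2 E2" and dr: "cmp T dd r0 \<in> hom T E2 E2"
      using cmp_hom[OF r(3) s] cmp_hom[OF r0 r(2)] .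
    have a: "cmp T (cmp T dd t) e \<in> hom T E2 E2" and b: "cmp T dd (cmp T u e) \<in> hom T E2 E2"
      using cmp_hom[OF r(3) dt] cmp_hom[OF ue r(2)] .
    have 1: "cmp T s' e = madd T (cmp T s e) (cmp T (cmp T dd t) e)" using distr[OF s dt r(3)] s'_def by simp
    have 2: "cmp T dd r' = madd T (cmp T dd r0) (cmp T dd (cmp T u e))" using distl[OF r0 ue r(2)] r'_def by simp
    have te: "cmp T t e \<in> hom T E2 C2" using cmp_hom[OF r(3) t(1)] .
    have 3: "madd T (cmp T (cmp T dd t) e) (cmp T dd (cmp T u e)) = mzero T E2 E2"
    proof -
      have "madd T (cmp T (cmp T dd t) e) (cmp T dd (cmp T u e)) = cmp T dd (madd T (cmp T t e) (cmp T u e))"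
        using assoc[OF r(3) t(1) r(2)] distl[OF te ue r(2)] by simp
      also have "\<dots> = cmp T dd (cmp T (madd T t u) e)" using distr[OF t(1) u(1) r(3)] by simp
      also have "\<dots> = mzero T E2 E2"
        using u(2) cmp_zero_l[OF r(3) o2(2)] cmp_zero_r[OF r(2) E2] by simp
      finally show ?thesis .
    qed
    have "madd T (cmp T s' e) (cmp T dd r') =
          madd T (madd T (cmp T s e) (cmp T dd r0)) (madd T (cmp T (cmp T dd t) e) (cmp T dd (cmp T u e)))"
      using 1 2 add_swap4[OF se a dr b] by simp
    also have "\<dots> = madd T (cmp T s e) (cmp T dd r0)" using 3 add_zero add_hom[OF se dr] by simp
    also have "\<dots> = idm T E2" using sum add_comm[OF se dr] by simp
    finally show ?thesis .
  qed
  have bp2: "is_biproduct T C1 C2 E2 s' dd e r'"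
    unfolding is_biproduct_def using s' r(2) r(3) r' b1 b2 b3 b4 ed by simp
  have tsp: "etri T C1 E2 C2 s' r' (ezero T C2 C1)" using split_etri[OF bp2] .
  from ET4op_rule[OF r(1) tsp] obtain E' k k' dd' e'' d3 where
    q: "etri T E' M C2 k' k d3" "etri T A E' C1 dd' e'' (epull T A s' eps)" by blast
  have "etri T A E' C1 dd' e'' d1" using q(2) sig by simp
  from real_uniq[OF t1 this] obtain b where "is_iso T B1 E' b" by blast
  hence "isomorphic T B1 E'" unfolding isomorphic_def by blast
  moreover have "conflation T B2 M C1" using tm unfolding conflation_def by blast
  moreover have "conflation T E' M C2" using q(1) unfolding conflation_def by blast
  ultimately show ?thesis by blast
qed

lemma pushout_c:
  assumes "conflation T A B1 C1" "conflation T A B2 C2"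
  shows "\<exists>M E'. conflation T B2 M C1 \<and> conflation T E' M C2 \<and> isomorphic T B1 E'"
  using assms pushout unfolding conflation_def by blast

lemma ET4_c: assumes "conflation T A B D" "conflation T B C F"
  shows "\<exists>E. conflation T A C E \<and> conflation T D E F"
  using assms ET4_rule unfolding conflation_def by metis


end

locale CT = ETC T for T :: "('o,'m,'e) extri" +
  fixes X W :: "'o set"
  assumes sX: "subcat_in T (obj T) X" and sW: "subcat_in T (obj T) W"
    and ec: "ext_closed T X" and ic: "inj_cogenerator T X W"
begin

definition Phi :: "nat \<Rightarrow> 'o \<Rightarrow> bool" where
  "Phi j Y \<longleftrightarrow> (\<forall>L I. L 0 = Y \<longrightarrow>
        (\<forall>i < j. injective T (I i) \<and> conflation T (L i) (I i) (L (Suc i))) \<longrightarrow>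
        (\<forall>A \<in> X. Ext_zero T A (L j)))"

lemmas sX1 = sX[unfolded subcat_in_def, THEN conjunct1]
lemmas sX2 = sX[unfolded subcat_in_def, THEN conjunct2, THEN conjunct1]
lemmas sX3 = sX[unfolded subcat_in_def, THEN conjunct2, THEN conjunct2, THEN conjunct1]
lemmas sX4 = sX[unfolded subcat_in_def, THEN conjunct2, THEN conjunct2, THEN conjunct2, THEN conjunct1]
lemmas sX5 = sX[unfolded subcat_in_def, THEN conjunct2, THEN conjunct2, THEN conjunct2, THEN conjunct2]
lemmas sW2 = sW[unfolded subcat_in_def, THEN conjunct2, THEN conjunct1]
lemmas sW5 = sW[unfolded subcat_in_def, THEN conjunct2, THEN conjunct2, THEN conjunct2, THEN conjunct2]
lemma X_obj: "X \<subseteq> obj T" using sX1 .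
lemma W_X: "W \<subseteq> X" using ic unfolding inj_cogenerator_def by blast
lemma cogen: "A \<in> X \<Longrightarrow> \<exists>V A'. V \<in> W \<and> A' \<in> X \<and> conflation T A V A'"
  using ic unfolding inj_cogenerator_def by blast

lemma phi0: "Phi 0 Y \<longleftrightarrow> (\<forall>A \<in> X. Ext_zero T A Y)"
proof
  assume "Phi 0 Y" thus "\<forall>A \<in> X. Ext_zero T A Y" unfolding Phi_def
    by (erule_tac x="\<lambda>_. Y" in allE) auto
next
  assume "\<forall>A \<in> X. Ext_zero T A Y" thus "Phi 0 Y" unfolding Phi_def by auto
qed

lemma phi_shift: assumes J: "injective T J" and c: "conflation T Y J Y'" and p: "Phi (Suc j) Y"
  shows "Phi j Y'"
  unfolding Phi_def
proof (intro allI impI)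
  fix L I assume L0: "L 0 = Y'" and ch: "\<forall>i < j. injective T (I i) \<and> conflation T (L i) (I i) (L (Suc i))"
  define L2 where "L2 = (\<lambda>i. case i of 0 \<Rightarrow> Y | Suc k \<Rightarrow> L k)"
  define I2 where "I2 = (\<lambda>i. case i of 0 \<Rightarrow> J | Suc k \<Rightarrow> I k)"
  have "\<forall>i < Suc j. injective T (I2 i) \<and> conflation T (L2 i) (I2 i) (L2 (Suc i))"
  proof (intro allI impI)
    fix i assume i: "i < Suc j"
    show "injective T (I2 i) \<and> conflation T (L2 i) (I2 i) (L2 (Suc i))"
    proof (cases i)
      case 0 thus ?thesis using J c L0 unfolding L2_def I2_def by simp
    next
      case (Suc k) thus ?thesis using ch i unfolding L2_def I2_def by simp
    qed
  qed
  moreover have "L2 0 = Y" unfolding L2_def by simp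
  ultimately have "\<forall>A \<in> X. Ext_zero T A (L2 (Suc j))" using p unfolding Phi_def by blast
  thus "\<forall>A \<in> X. Ext_zero T A (L j)" unfolding L2_def by simp
qed

lemma phi_tail: assumes h: "\<And>J Y'. injective T J \<Longrightarrow> conflation T Y J Y' \<Longrightarrow> Phi j Y'"
  shows "Phi (Suc j) Y"
  unfolding Phi_def
proof (intro allI impI)
  fix L I assume L0: "L 0 = Y" and ch: "\<forall>i < Suc j. injective T (I i) \<and> conflation T (L i) (I i) (L (Suc i))"
  have "injective T (I 0)" "conflation T Y (I 0) (L 1)" using ch L0 by auto
  hence p: "Phi j (L 1)" using h by blast
  have "\<forall>i < j. injective T (I (Suc i)) \<and> conflation T (L (Suc i)) (I (Suc i)) (L (Suc (Suc i)))"
    using ch by auto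
  thus "\<forall>A \<in> X. Ext_zero T A (L (Suc j))"
    using p unfolding Phi_def by (erule_tac x="\<lambda>i. L (Suc i)" in allE, erule_tac x="\<lambda>i. I (Suc i)" in allE) auto
qed

lemma phi_inj: "injective T I \<Longrightarrow> Phi j I"
proof (induction j arbitrary: I)
  case 0
  have "I \<in> obj T" using 0 unfolding injective_def by simp
  thus ?case unfolding phi0 using inj_ext_zero[OF 0] X_obj by blast
next
  case (Suc j)
  show ?case
  proof (rule phi_tail)
    fix J Y' assume J: "injective T J" and c: "conflation T I J Y'"
    obtain x y d where t: "etri T I J Y' x y d" using c unfolding conflation_def by blast
    have Y': "Y' \<in> obj T" using etriD[OF t] by simp
    obtain s r where bp: "is_biproduct T I Y' J x s r y" using ext0_split[OF t inj_ext_zero[OF Suc.prems Y']] by blast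
    have "s \<in> hom T Y' J" "y \<in> hom T J Y'" "cmp T y s = idm T Y'" using bp unfolding is_biproduct_def by auto
    hence "injective T Y'" using inj_retract[OF J] by blast
    thus "Phi j Y'" using Suc.IH by blast
  qed
qed

definition ExtP :: "nat \<Rightarrow> bool" where
  "ExtP i \<longleftrightarrow> (\<forall>A B C. conflation T A B C \<longrightarrow> (\<forall>k\<le>i. Phi k A \<and> Phi k C) \<longrightarrow> Phi i B)"
definition ConeP :: "nat \<Rightarrow> bool" where
  "ConeP i \<longleftrightarrow> (\<forall>K V Y. conflation T K V Y \<longrightarrow> (\<forall>k\<le>Suc i. Phi k K) \<longrightarrow> (\<forall>k\<le>i. Phi k V) \<longrightarrow> Phi i Y)"

lemma ExtP0: "ExtP 0"
  unfolding ExtP_def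
proof (intro allI impI)
  fix A B C assume c: "conflation T A B C" and p: "\<forall>k\<le>0. Phi k A \<and> Phi k C"
  have pa: "Phi 0 A" and pc: "Phi 0 C" using p by auto
  show "Phi 0 B" unfolding phi0
  proof
    fix U assume U: "U \<in> X"
    have Uo: "U \<in> obj T" using U X_obj by blast
    show "Ext_zero T U B" using conf_vanish[OF c Uo] pa pc U unfolding phi0 by blast
  qed
qed

lemma ConeP0: "ConeP 0"
  unfolding ConeP_def
proof (intro allI impI)
  fix K V Y assume c: "conflation T K V Y" and pK: "\<forall>k\<le>Suc 0. Phi k K" and pV: "\<forall>k\<le>0. Phi k V"
  have o: "K \<in> obj T" "V \<in> obj T" "Y \<in> obj T" using confD[OF c] by auto
  obtain I K' where I: "injective T I" and cI: "conflation T K I K'" using einj o(1) unfolding enough_injectives_def by blast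
  have pK': "Phi 0 K'" using phi_shift[OF I cI] pK by simp
  obtain M E' where m: "conflation T I M Y" "conflation T E' M K'" "isomorphic T V E'"
    using pushout_c[OF c cI] by blast
  obtain x y d where t: "etri T I M Y x y d" using m(1) unfolding conflation_def by blast
  obtain s r where bp: "is_biproduct T I Y M x s r y" using ext0_split[OF t inj_ext_zero[OF I o(3)]] by blast
  have sy: "s \<in> hom T Y M" "y \<in> hom T M Y" "cmp T y s = idm T Y" using bp unfolding is_biproduct_def by auto
  have "\<forall>A \<in> X. Ext_zero T A Y"
  proof
    fix A assume A: "A \<in> X"
    have Ao: "A \<in> obj T" using A X_obj by blast
    have "Phi 0 V" using pV by simp
    hence "Ext_zero T A V" using A unfolding phi0 by blast
    hence "Ext_zero T A E'" using ext_zero_iso[OF m(3) Ao] by simp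
    moreover have "Ext_zero T A K'" using pK' A unfolding phi0 by simp
    ultimately have "Ext_zero T A M" using conf_vanish[OF m(2) Ao] by blast
    thus "Ext_zero T A Y" using ext_zero_retract[OF sy Ao] by blast
  qed
  thus "Phi 0 Y" unfolding phi0 .
qed

lemma ExtP_Suc: assumes "ConeP j" shows "ExtP (Suc j)"
  unfolding ExtP_def
proof (intro allI impI)
  fix A B C assume c: "conflation T A B C" and p: "\<forall>k\<le>Suc j. Phi k A \<and> Phi k C"
  show "Phi (Suc j) B"
  proof (rule phi_tail)
    fix I0 B1 assume I0: "injective T I0" and c1: "conflation T B I0 B1"
    obtain E where e: "conflation T A I0 E" "conflation T C E B1" using ET4_c[OF c c1] by blast
    have pE: "\<forall>k\<le>j. Phi k E" using phi_shift[OF I0 e(1)] p by auto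
    have "\<forall>K V Y. conflation T K V Y \<longrightarrow> (\<forall>k\<le>Suc j. Phi k K) \<longrightarrow> (\<forall>k\<le>j. Phi k V) \<longrightarrow> Phi j Y"
      using assms unfolding ConeP_def .
    hence "conflation T C E B1 \<longrightarrow> (\<forall>k\<le>Suc j. Phi k C) \<longrightarrow> (\<forall>k\<le>j. Phi k E) \<longrightarrow> Phi j B1"
      by (elim allE)
    moreover have "\<forall>k\<le>Suc j. Phi k C" using p by blast
    ultimately show "Phi j B1" using e(2) pE by blast
  qed
qed

lemma ConeP_Suc: assumes ex: "\<forall>i\<le>j. ExtP i" and cn: "ConeP j" shows "ConeP (Suc j)"
  unfolding ConeP_def
proof (intro allI impI)
  fix K V Y assume c: "conflation T K V Y" and pK: "\<forall>k\<le>Suc (Suc j). Phi k K" and pV: "\<forall>k\<le>Suc j. Phi k V"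
  show "Phi (Suc j) Y"
  proof (rule phi_tail)
    fix I0 L1 assume I0: "injective T I0" and c1: "conflation T Y I0 L1"
    have Vo: "V \<in> obj T" using confD[OF c] by simp
    obtain J V' where J: "injective T J" and cJ: "conflation T V J V'" using einj Vo unfolding enough_injectives_def by blast
    obtain E where e: "conflation T K J E" "conflation T Y E V'" using ET4_c[OF c cJ] by blast
    obtain M E' where m: "conflation T E M L1" "conflation T E' M V'" "isomorphic T I0 E'"
      using pushout_c[OF c1 e(2)] by blast
    have injE': "injective T E'" using inj_iso[OF I0 m(3)] .
    have pV': "\<forall>k\<le>j. Phi k V'" using phi_shift[OF J cJ] pV by auto
    have pM: "\<forall>k\<le>j. Phi k M"
    proof (intro allI impI)
      fix k assume k: "k \<le> j"
      have "ExtP k" using ex k by simp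
      hence "\<forall>A B C. conflation T A B C \<longrightarrow> (\<forall>k'\<le>k. Phi k' A \<and> Phi k' C) \<longrightarrow> Phi k B"
        unfolding ExtP_def .
      hence "conflation T E' M V' \<longrightarrow> (\<forall>k'\<le>k. Phi k' E' \<and> Phi k' V') \<longrightarrow> Phi k M" by (elim allE)
      moreover have "\<forall>k'\<le>k. Phi k' E' \<and> Phi k' V'" using phi_inj[OF injE'] pV' k by auto
      ultimately show "Phi k M" using m(2) by blast
    qed
    have pE: "\<forall>k\<le>Suc j. Phi k E" using phi_shift[OF J e(1)] pK by auto
    have "\<forall>K V Y. conflation T K V Y \<longrightarrow> (\<forall>k\<le>Suc j. Phi k K) \<longrightarrow> (\<forall>k\<le>j. Phi k V) \<longrightarrow> Phi j Y"
      using cn unfolding ConeP_def .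
    hence "conflation T E M L1 \<longrightarrow> (\<forall>k\<le>Suc j. Phi k E) \<longrightarrow> (\<forall>k\<le>j. Phi k M) \<longrightarrow> Phi j L1"
      by (elim allE)
    thus "Phi j L1" using m(1) pE pM by blast
  qed
qed

lemma ExtCone: "\<forall>i\<le>j. ExtP i \<and> ConeP i"
proof (induction j)
  case 0 thus ?case using ExtP0 ConeP0 by simp
next
  case (Suc j)
  have "ExtP (Suc j)" using ExtP_Suc Suc.IH by simp
  moreover have "ConeP (Suc j)" using ConeP_Suc Suc.IH by simp
  ultimately show ?case using Suc.IH le_Suc_eq by auto
qed

lemma ConeP_all: "ConeP j" using ExtCone by blast

lemma hat0: "hat_n T Z 0 = Z" unfolding hat_n_def by auto

lemma hatSuc: "C \<in> hat_n T Z (Suc n) \<longleftrightarrow> (\<exists>K Z0. Z0 \<in> Z \<and> conflation T K Z0 C \<and> K \<in> hat_n T Z n)"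
proof
  assume "C \<in> hat_n T Z (Suc n)"
  then obtain K Zs where h: "K 0 = C" "\<forall>i < Suc n. Zs i \<in> Z \<and> conflation T (K (Suc i)) (Zs i) (K i)" "K (Suc n) \<in> Z"
    unfolding hat_n_def by blast
  have "K 1 \<in> hat_n T Z n" unfolding hat_n_def
    by (rule CollectI, rule exI[where x="\<lambda>i. K (Suc i)"], rule exI[where x="\<lambda>i. Zs (Suc i)"]) (use h in auto)
  thus "\<exists>K Z0. Z0 \<in> Z \<and> conflation T K Z0 C \<and> K \<in> hat_n T Z n" using h by force
next
  assume "\<exists>K Z0. Z0 \<in> Z \<and> conflation T K Z0 C \<and> K \<in> hat_n T Z n"
  then obtain K0 Z0 K Zs where h: "Z0 \<in> Z" "conflation T K0 Z0 C" "K 0 = K0"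
     "\<forall>i < n. Zs i \<in> Z \<and> conflation T (K (Suc i)) (Zs i) (K i)" "K n \<in> Z"
    unfolding hat_n_def by blast
  define K2 where "K2 = (\<lambda>i. case i of 0 \<Rightarrow> C | Suc k \<Rightarrow> K k)"
  define Z2 where "Z2 = (\<lambda>i. case i of 0 \<Rightarrow> Z0 | Suc k \<Rightarrow> Zs k)"
  have "\<forall>i < Suc n. Z2 i \<in> Z \<and> conflation T (K2 (Suc i)) (Z2 i) (K2 i)"
  proof (intro allI impI)
    fix i assume i: "i < Suc n"
    show "Z2 i \<in> Z \<and> conflation T (K2 (Suc i)) (Z2 i) (K2 i)"
      using h i unfolding K2_def Z2_def by (cases i) auto
  qed
  moreover have "K2 0 = C" "K2 (Suc n) \<in> Z" using h unfolding K2_def by auto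
  ultimately show "C \<in> hat_n T Z (Suc n)" unfolding hat_n_def by blast
qed

lemma hat_obj: assumes "Z \<subseteq> obj T" shows "hat T Z \<subseteq> obj T"
proof
  fix C assume "C \<in> hat T Z"
  then obtain n where n: "C \<in> hat_n T Z n" unfolding hat_def by blast
  show "C \<in> obj T"
  proof (cases n)
    case 0 thus ?thesis using n assms hat0 by auto
  next
    case (Suc m) thus ?thesis using n hatSuc confD by blast
  qed
qed

lemma hat_mono: assumes Z: "Z1 \<subseteq> Z2" shows "hat T Z1 \<subseteq> hat T Z2"
proof
  fix C assume "C \<in> hat T Z1"
  then obtain n where "C \<in> hat_n T Z1 n" unfolding hat_def by blast
  then obtain K Zs where h: "K 0 = C" "\<forall>i < n. Zs i \<in> Z1 \<and> conflation T (K (Suc i)) (Zs i) (K i)" "K n \<in> Z1"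
    unfolding hat_n_def by blast
  have "\<forall>i < n. Zs i \<in> Z2 \<and> conflation T (K (Suc i)) (Zs i) (K i)" using h(2) Z by blast
  moreover have "K n \<in> Z2" using h(3) Z by blast
  ultimately have "C \<in> hat_n T Z2 n" unfolding hat_n_def using h(1) by blast
  thus "C \<in> hat T Z2" unfolding hat_def by blast
qed

lemma hat_base: "Z \<subseteq> hat T Z"
proof
  fix C assume "C \<in> Z"
  hence "C \<in> hat_n T Z 0" using hat0 by simp
  thus "C \<in> hat T Z" unfolding hat_def by blast
qed

lemma hat_step: assumes "Z0 \<in> Z" "conflation T K Z0 C" "K \<in> hat T Z" shows "C \<in> hat T Z"
proof -
  obtain n where "K \<in> hat_n T Z n" using assms(3) unfolding hat_def by blast
  hence "C \<in> hat_n T Z (Suc n)" using hatSuc assms(1,2) by blast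
  thus ?thesis unfolding hat_def by blast
qed

lemma W_phi: assumes V: "V \<in> W" shows "Phi j V"
  unfolding Phi_def
proof (intro allI impI ballI)
  fix L I A assume L0: "L 0 = V" and ch: "\<forall>i < j. injective T (I i) \<and> conflation T (L i) (I i) (L (Suc i))"
    and A: "A \<in> X"
  have "higher_Ext_zero T (Suc j) A V" using ic V A unfolding inj_cogenerator_def by simp
  hence "\<forall>L I. L 0 = V \<longrightarrow>
        (\<forall>i < j. injective T (I i) \<and> conflation T (L i) (I i) (L (Suc i))) \<longrightarrow>
        Ext_zero T A (L j)" unfolding higher_Ext_zero_def by simp
  thus "Ext_zero T A (L j)" using L0 ch by blast
qed

lemma hatW_phi: "Y \<in> hat_n T W n \<Longrightarrow> Phi j Y"
proof (induction n arbitrary: Y j)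
  case 0 thus ?case using W_phi hat0 by blast
next
  case (Suc n)
  then obtain K Z0 where h: "Z0 \<in> W" "conflation T K Z0 Y" "K \<in> hat_n T W n" using hatSuc by blast
  have "\<forall>k. Phi k K" using Suc.IH h(3) by blast
  moreover have "\<forall>k. Phi k Z0" using W_phi h(1) by blast
  moreover have "\<forall>K V Y. conflation T K V Y \<longrightarrow> (\<forall>k\<le>Suc j. Phi k K) \<longrightarrow> (\<forall>k\<le>j. Phi k V) \<longrightarrow> Phi j Y"
    using ConeP_all[of j] unfolding ConeP_def .
  ultimately show ?case using h(2) by blast
qed

lemma orth: assumes A: "A \<in> X" and Y: "Y \<in> hat T W" shows "Ext_zero T A Y"
proof -
  obtain n where "Y \<in> hat_n T W n" using Y unfolding hat_def by blast
  hence "Phi 0 Y" using hatW_phi by blast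
  thus ?thesis using A unfolding phi0 by blast
qed

lemma XperpW: assumes U: "U \<in> X" and z: "\<forall>A \<in> X. Ext_zero T A U" shows "U \<in> W"
proof -
  obtain V U' where v: "V \<in> W" "U' \<in> X" "conflation T U V U'" using cogen[OF U] by blast
  obtain x y d where t: "etri T U V U' x y d" using v(3) unfolding conflation_def by blast
  obtain s r where bp: "is_biproduct T U U' V x s r y" using ext0_split[OF t] z v(2) by blast
  have "U \<in> obj T" "U' \<in> obj T" using etriD[OF t] by auto
  thus ?thesis using sW5[rule_format, OF v(1) _ _ bp] by blast
qed

lemma approx: "C \<in> hat_n T X n \<Longrightarrow> (\<exists>V U. V \<in> hat T W \<and> U \<in> X \<and> conflation T V U C) \<and>
    (\<exists>V U. V \<in> hat T W \<and> U \<in> X \<and> conflation T C V U)"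
proof (induction n arbitrary: C)
  case 0
  hence C: "C \<in> X" using hat0 by blast
  hence Co: "C \<in> obj T" using X_obj by blast
  obtain Z where Z: "Z \<in> W" "is_zero_obj T Z" using sW2 by blast
  have "etri T Z C C (mzero T Z C) (idm T C) (ezero T C Z)" using split_etri[OF bip_zl[OF Z(2) Co]] .
  hence "conflation T Z C C" unfolding conflation_def by blast
  moreover have "Z \<in> hat T W" using Z(1) hat_base by blast
  ultimately have f1: "\<exists>V U. V \<in> hat T W \<and> U \<in> X \<and> conflation T V U C" using C by blast
  obtain V U' where v: "V \<in> W" "U' \<in> X" "conflation T C V U'" using cogen[OF C] by blast
  have "V \<in> hat T W" using v(1) hat_base by blast
  hence "\<exists>V U. V \<in> hat T W \<and> U \<in> X \<and> conflation T C V U" using v by blast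
  thus ?case using f1 by (intro conjI)
next
  case (Suc n)
  then obtain K X0 where h: "X0 \<in> X" "conflation T K X0 C" "K \<in> hat_n T X n" using hatSuc by blast
  have "\<exists>V U. V \<in> hat T W \<and> U \<in> X \<and> conflation T K V U" using Suc.IH[OF h(3)] by (elim conjE)
  then obtain VK UK where v: "VK \<in> hat T W" "UK \<in> X" "conflation T K VK UK" by blast
  obtain M E' where m: "conflation T VK M C" "conflation T E' M UK" "isomorphic T X0 E'"
    using pushout_c[OF h(2) v(3)] by blast
  have "E' \<in> obj T" using confD[OF m(2)] by simp
  hence "E' \<in> X" using sX4[rule_format, OF h(1) _ m(3)] by blast
  hence MX: "M \<in> X" using ec m(2) v(2) unfolding ext_closed_def by blast
  obtain W' M' where w: "W' \<in> W" "M' \<in> X" "conflation T M W' M'" using cogen[OF MX] by blast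
  obtain E where e: "conflation T VK W' E" "conflation T C E M'" using ET4_c[OF m(1) w(3)] by blast
  have "E \<in> hat T W" using hat_step[OF w(1) e(1) v(1)] .
  hence f2: "\<exists>V U. V \<in> hat T W \<and> U \<in> X \<and> conflation T C V U" using e(2) w(2) by blast
  have "\<exists>V U. V \<in> hat T W \<and> U \<in> X \<and> conflation T V U C" using m(1) v(1) MX by blast
  thus ?case using f2 by (intro conjI)
qed

lemma key: assumes A: "A \<in> hat T X" and z: "\<forall>U \<in> X. Ext_zero T U A" shows "A \<in> hat T W"
proof -
  obtain n where "A \<in> hat_n T X n" using A unfolding hat_def by blast
  then obtain V U where v: "V \<in> hat T W" "U \<in> X" "conflation T V U A" using approx by blast
  have "\<forall>U' \<in> X. Ext_zero T U' U"
  proof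
    fix U' assume U': "U' \<in> X"
    show "Ext_zero T U' U" using conf_vanish[OF v(3)] U' X_obj orth[OF U' v(1)] z by blast
  qed
  hence "U \<in> W" using XperpW v(2) by blast
  thus ?thesis using hat_step v by blast
qed

lemma main: "cotorsion_pair_on T (hat T X) X (hat T W)"
proof -
  have hXo: "hat T X \<subseteq> obj T" using hat_obj X_obj by blast
  have hWX: "hat T W \<subseteq> hat T X" using hat_mono W_X by blast
  have s1: "subcat_in T (hat T X) X"
    unfolding subcat_in_def
  proof (intro conjI allI impI)
    show "X \<subseteq> hat T X" by (rule hat_base)
    show "\<exists>Z\<in>X. is_zero_obj T Z" by (rule sX2)
  next
    fix A B S' i1 i2 p1 p2 assume a: "A \<in> X" "B \<in> X" "S' \<in> hat T X" "is_biproduct T A B S' i1 i2 p1 p2"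
    show "S' \<in> X" using sX3[rule_format, OF a(1,2) _ a(4)] a(3) hXo by blast
  next
    fix A B assume a: "A \<in> X" "B \<in> hat T X" "isomorphic T A B"
    show "B \<in> X" using sX4[rule_format, OF a(1) _ a(3)] a(2) hXo by blast
  next
    fix A B S' i1 i2 p1 p2 assume a: "S' \<in> X" "A \<in> hat T X" "B \<in> hat T X" "is_biproduct T A B S' i1 i2 p1 p2"
    show "A \<in> X" using sX5[rule_format, OF a(1) _ _ a(4)] a(2,3) hXo by blast
  qed
  have s2: "subcat_in T (hat T X) (hat T W)"
    unfolding subcat_in_def
  proof (intro conjI allI impI)
    show "hat T W \<subseteq> hat T X" by (rule hWX)
    show "\<exists>Z\<in>hat T W. is_zero_obj T Z" using sW2 hat_base[of W] by blast
  next
    fix A B S' i1 i2 p1 p2 assume a: "A \<in> hat T W" "B \<in> hat T W" "S' \<in> hat T X" "is_biproduct T A B S' i1 i2 p1 p2"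
    show "S' \<in> hat T W"
    proof (rule key[OF a(3)], intro ballI)
      fix U assume U: "U \<in> X"
      show "Ext_zero T U S'" using ext_zero_bip[OF a(4)] U X_obj orth a(1,2) by blast
    qed
  next
    fix A B assume a: "A \<in> hat T W" "B \<in> hat T X" "isomorphic T A B"
    show "B \<in> hat T W"
    proof (rule key[OF a(2)], intro ballI)
      fix U assume U: "U \<in> X"
      show "Ext_zero T U B" using ext_zero_iso[OF a(3)] U X_obj orth a(1) by blast
    qed
  next
    fix A B S' i1 i2 p1 p2 assume a: "S' \<in> hat T W" "A \<in> hat T X" "B \<in> hat T X" "is_biproduct T A B S' i1 i2 p1 p2"
    have r: "i1 \<in> hom T A S'" "p1 \<in> hom T S' A" "cmp T p1 i1 = idm T A" using a(4) unfolding is_biproduct_def by auto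
    show "A \<in> hat T W"
    proof (rule key[OF a(2)], intro ballI)
      fix U assume U: "U \<in> X"
      show "Ext_zero T U A" using ext_zero_retract[OF r] U X_obj orth a(1) by blast
    qed
  qed
  have s3: "\<forall>A \<in> X. \<forall>B \<in> hat T W. Ext_zero T A B" using orth by blast
  have s45: "(\<exists>VC UC. VC \<in> hat T W \<and> UC \<in> X \<and> conflation T VC UC C) \<and>
      (\<exists>VC UC. VC \<in> hat T W \<and> UC \<in> X \<and> conflation T C VC UC)" if C: "C \<in> hat T X" for C
  proof -
    obtain n where "C \<in> hat_n T X n" using C unfolding hat_def by blast
    thus ?thesis using approx by blast
  qed
  have s4: "\<forall>C \<in> hat T X. \<exists>VC UC. VC \<in> hat T W \<and> UC \<in> X \<and> conflation T VC UC C"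
    using s45 by blast
  have s5: "\<forall>C \<in> hat T X. \<exists>VC UC. VC \<in> hat T W \<and> UC \<in> X \<and> conflation T C VC UC"
    using s45 by blast
  show ?thesis unfolding cotorsion_pair_on_def using s1 s2 s3 s4 s5 by (intro conjI)
qed

end

theorem proposition4p5:
  fixes T :: "('o, 'm, 'e) extri" and X W :: "'o set"
  assumes "extriangulated T"
    and "enough_projectives T" and "enough_injectives T"
    and "subcat_in T (obj T) X" and "subcat_in T (obj T) W"
    and "ext_closed T X" and "cocone_closed T X"
    and "inj_cogenerator T X W"
  shows "cotorsion_pair_on T (hat T X) X (hat T W)"
proof -
  have "CT T X W" unfolding CT_def ETC_def CT_axioms_def using assms by simp
  thus ?thesis using CT.main by blast
qed

end
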